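(* Let $\Sigma$ be a finite ranked set, $X$ a ranked set and $G\in\mathsf{H}X$. Then there is an operation $f$, taking an arity-respecting $X$-indexed family of models (one model $\mathcal{A}_x$ in the image of $\lceil\cdot\rceil$ on $\mathsf{H}\Sigma$ of arity equal to that of $x$ for each $x\in X$) to a model, which is compatible with counting MSO and satisfies $f\big((\lceil\eta(x)\rceil)_{x\in X}\big)=\lceil [\![G]\!](\eta)\rceil$ (up to isomorphism) for every arity-preserving valuation $\eta:X\to\mathsf{H}\Sigma$.
   Context: A ranked set is a set in which each element has an arity in $\{0,1,2,\dots\}$. A sourced hypergraph of arity $n$ over $\Sigma$: finite vertex set, finite ranked set of hyperedges labelled arity-preservingly by $\Sigma$, incidence mapping each $m$-ary hyperedge $e$ to a non-repeating list $e[1],\dots,e[m]$ of vertices, injective sources $\{1,\dots,n\}\to$ vertices; $\mathsf{H}\Sigma$ denotes these up to isomorphism. Flattening of $K\in\mathsf{H}\mathsf{H}\Sigma$: hyperedges $(e,f)$, $e$ a hyperedge of $K$, $f$ a hyperedge of the label of $e$ (label from $f$); vertices: vertices of $K$ and pairs $(e,v)$ with $v$ a non-source vertex of the label of $e$; sources from $K$; incidence of $(e,f)$ is that of $f$ with $v\mapsto(e,v)$ for non-sources and $v\mapsto e[i]$ if $v$ is the $i$-th source of the label of $e$. $[\![G]\!](\eta)$ is the flattening of the element of $\mathsf{H}\mathsf{H}\Sigma$ obtained from $G$ by replacing each label $x$ by $\eta(x)$. For $K\in\mathsf{H}\Sigma$, the model $\lceil K\rceil$ has universe the disjoint union of vertices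 and hyperedges, for each $a\in\Sigma$ a unary relation of hyperedges labelled $a$, for each $i$ up to the maximal arity in $\Sigma$ a binary relation $\{(e,v):e[i]=v\}$, and for each $i$ up to the arity of $K$ a constant for the $i$-th source. Counting MSO (in extended syntax) is MSO extended with predicates $|Y|\equiv k\bmod m$ (true iff $Y$ finite of size $\equiv k$ mod $m$), a binary set-inclusion predicate, a unary "is a singleton" predicate, and for every quantifier-free first-order formula $\psi(x)$ with one free variable a set constant $[\psi]$ denoting the set of elements satisfying $\psi$; quantifier rank counts first- and second-order quantifiers alike. For $r\in\mathbb{N}$ and $M\subseteq\mathbb{N}$, two models over the same vocabulary are $(r,M)$-equivalent if they satisfy the same counting MSO sentences of quantifier rank at most $r$ using only moduli from $M$. An operation on families of models is compatible with counting MSO if for all $r$ and $M$, componentwise $(r,M)$-equivalent input families yield $(r,M)$-equivalent outputs. *)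

theory Defs
  imports Main
begin

text \<open>A (concrete) sourced hypergraph: vertices, hyperedges, labelling, incidence lists
  (0-based lists; the paper's e[i] is inc e ! (i-1)) and a list of sources.\<close>

record ('v, 'e, 'a) hg =
  verts :: "'v set"
  edges :: "'e set"
  lab   :: "'e \<Rightarrow> 'a"
  inc   :: "'e \<Rightarrow> 'v list"
  srcs  :: "'v list"

definition is_hg :: "'a set \<Rightarrow> ('a \<Rightarrow> nat) \<Rightarrow> ('v, 'e, 'a, 'z) hg_scheme \<Rightarrow> bool" where
  "is_hg S ar H \<longleftrightarrow>
     finite (verts H) \<and> finite (edges H) \<and>
     (\<forall>e\<in>edges H. lab H e \<in> S \<and> length (inc H e) = ar (lab H e) \<and>
                  distinct (inc H e) \<and> set (inc H e) \<subseteq> verts H) \<and>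
     distinct (srcs H) \<and> set (srcs H) \<subseteq> verts H"

definition arity :: "('v, 'e, 'a, 'z) hg_scheme \<Rightarrow> nat" where
  "arity H = length (srcs H)"

definition valuation :: "'a set \<Rightarrow> ('a \<Rightarrow> nat) \<Rightarrow> 'x set \<Rightarrow> ('x \<Rightarrow> nat)
    \<Rightarrow> ('x \<Rightarrow> ('v, 'e, 'a) hg) \<Rightarrow> bool" where
  "valuation S arS X arX \<eta> \<longleftrightarrow> (\<forall>x\<in>X. is_hg S arS (\<eta> x) \<and> arity (\<eta> x) = arX x)"

definition src_pos :: "'v list \<Rightarrow> 'v \<Rightarrow> nat" where
  "src_pos s v = (LEAST i. i < length s \<and> s ! i = v)"

text \<open>[[G]](\<eta>): the flattening of G with each label x replaced by \<eta> x.
  Vertices of K become Inl v, inner (non-source) vertices Inr (e, v).\<close>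
definition flatten :: "('vg, 'eg, 'x) hg \<Rightarrow> ('x \<Rightarrow> ('v, 'e, 'a) hg)
     \<Rightarrow> ('vg + 'eg \<times> 'v, 'eg \<times> 'e, 'a) hg" where
  "flatten G \<eta> =
    \<lparr> verts = Inl ` verts G \<union>
              {Inr (e, v) | e v. e \<in> edges G \<and> v \<in> verts (\<eta> (lab G e))
                                 \<and> v \<notin> set (srcs (\<eta> (lab G e)))},
      edges = {(e, f) | e f. e \<in> edges G \<and> f \<in> edges (\<eta> (lab G e))},
      lab = (\<lambda>(e, f). lab (\<eta> (lab G e)) f),
      inc = (\<lambda>(e, f). map (\<lambda>v. if v \<in> set (srcs (\<eta> (lab G e)))
                               then Inl (inc G e ! src_pos (srcs (\<eta> (lab G e))) v)
                               else Inr (e, v))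
                          (inc (\<eta> (lab G e)) f)),
      srcs = map Inl (srcs G) \<rparr>"

text \<open>Relational structures over the vocabulary of hypergraph models: unary relations
  indexed by labels, binary incidence relations indexed by positions i (1-based),
  constants indexed by 1-based source numbers.\<close>

record ('u, 'a) model =
  univ   :: "'u set"
  labrel :: "'a \<Rightarrow> 'u set"
  increl :: "nat \<Rightarrow> ('u \<times> 'u) set"
  cnst   :: "nat \<Rightarrow> 'u"

text \<open>A vocabulary (S, m, n): unary symbols S, binary symbols 1..m, constants 1..n.\<close>
type_synonym 'a voc = "'a set \<times> nat \<times> nat"

definition maxar :: "'a set \<Rightarrow> ('a \<Rightarrow> nat) \<Rightarrow> nat" where
  "maxar S ar = Max (insert 0 (ar ` S))"

definition voc :: "'a set \<Rightarrow> ('a \<Rightarrow> nat) \<Rightarrow> nat \<Rightarrow> 'a voc" where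
  "voc S ar n = (S, maxar S ar, n)"

definition model_of :: "('v, 'e, 'a) hg \<Rightarrow> ('v + 'e, 'a) model" where
  "model_of K =
    \<lparr> univ = Inl ` verts K \<union> Inr ` edges K,
      labrel = (\<lambda>a. {Inr e | e. e \<in> edges K \<and> lab K e = a}),
      increl = (\<lambda>i. {(Inr e, Inl v) | e v. e \<in> edges K \<and> 1 \<le> i \<and> i \<le> length (inc K e)
                                       \<and> inc K e ! (i - 1) = v}),
      cnst = (\<lambda>j. Inl (srcs K ! (j - 1))) \<rparr>"

definition iso_model :: "'a voc \<Rightarrow> ('u, 'a) model \<Rightarrow> ('w, 'a) model \<Rightarrow> bool" where
  "iso_model Vc A B \<longleftrightarrow> (case Vc of (S, m, n) \<Rightarrow>
     (\<exists>h. bij_betw h (univ A) (univ B) \<and>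
        (\<forall>a\<in>S. \<forall>u\<in>univ A. u \<in> labrel A a \<longleftrightarrow> h u \<in> labrel B a) \<and>
        (\<forall>i\<in>{1..m}. \<forall>u\<in>univ A. \<forall>w\<in>univ A. (u, w) \<in> increl A i \<longleftrightarrow> (h u, h w) \<in> increl B i) \<and>
        (\<forall>j\<in>{1..n}. cnst A j \<in> univ A \<and> h (cnst A j) = cnst B j)))"

datatype trm = V nat | C nat

datatype 'a fm =
    Eq trm trm
  | LabA 'a trm
  | IncA nat trm trm
  | Mem trm "'a st"
  | Cnt "'a st" nat nat    \<comment> \<open>Cnt Y k m : |Y| = k mod m\<close>
  | Sub "'a st" "'a st"
  | Sng "'a st"
  | Neg "'a fm"
  | Conj "'a fm" "'a fm"
  | Ex1 nat "'a fm"
  | Ex2 nat "'a fm"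
and 'a st =
    SV nat
  | SC "'a fm"   \<comment> \<open>set constant [\<psi>], \<psi> with free first-order variable V 0\<close>

fun tm :: "('u, 'a) model \<Rightarrow> (nat \<Rightarrow> 'u) \<Rightarrow> trm \<Rightarrow> 'u" where
  "tm A \<rho> (V i) = \<rho> i"
| "tm A \<rho> (C j) = cnst A j"

fun sat :: "('u, 'a) model \<Rightarrow> (nat \<Rightarrow> 'u) \<Rightarrow> (nat \<Rightarrow> 'u set) \<Rightarrow> 'a fm \<Rightarrow> bool"
and sset :: "('u, 'a) model \<Rightarrow> (nat \<Rightarrow> 'u) \<Rightarrow> (nat \<Rightarrow> 'u set) \<Rightarrow> 'a st \<Rightarrow> 'u set" where
  "sat A \<rho> \<sigma> (Eq s t) = (tm A \<rho> s = tm A \<rho> t)"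
| "sat A \<rho> \<sigma> (LabA a t) = (tm A \<rho> t \<in> labrel A a)"
| "sat A \<rho> \<sigma> (IncA i s t) = ((tm A \<rho> s, tm A \<rho> t) \<in> increl A i)"
| "sat A \<rho> \<sigma> (Mem t Y) = (tm A \<rho> t \<in> sset A \<rho> \<sigma> Y)"
| "sat A \<rho> \<sigma> (Cnt Y k m) = (finite (sset A \<rho> \<sigma> Y) \<and> card (sset A \<rho> \<sigma> Y) mod m = k mod m)"
| "sat A \<rho> \<sigma> (Sub Y Z) = (sset A \<rho> \<sigma> Y \<subseteq> sset A \<rho> \<sigma> Z)"
| "sat A \<rho> \<sigma> (Sng Y) = (\<exists>u. sset A \<rho> \<sigma> Y = {u})"
| "sat A \<rho> \<sigma> (Neg \<phi>) = (\<not> sat A \<rho> \<sigma> \<phi>)"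
| "sat A \<rho> \<sigma> (Conj \<phi> \<psi>) = (sat A \<rho> \<sigma> \<phi> \<and> sat A \<rho> \<sigma> \<psi>)"
| "sat A \<rho> \<sigma> (Ex1 i \<phi>) = (\<exists>u\<in>univ A. sat A (\<rho>(i := u)) \<sigma> \<phi>)"
| "sat A \<rho> \<sigma> (Ex2 i \<phi>) = (\<exists>U. U \<subseteq> univ A \<and> sat A \<rho> (\<sigma>(i := U)) \<phi>)"
| "sset A \<rho> \<sigma> (SV i) = \<sigma> i"
| "sset A \<rho> \<sigma> (SC \<psi>) = {u \<in> univ A. sat A (\<rho>(0 := u)) \<sigma> \<psi>}"

fun tvars :: "trm \<Rightarrow> nat set" where
  "tvars (V i) = {i}"
| "tvars (C j) = {}"

fun tconsts :: "trm \<Rightarrow> nat set" where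
  "tconsts (V i) = {}"
| "tconsts (C j) = {j}"

fun fv1 :: "'a fm \<Rightarrow> nat set" and fv1s :: "'a st \<Rightarrow> nat set" where
  "fv1 (Eq s t) = tvars s \<union> tvars t"
| "fv1 (LabA a t) = tvars t"
| "fv1 (IncA i s t) = tvars s \<union> tvars t"
| "fv1 (Mem t Y) = tvars t \<union> fv1s Y"
| "fv1 (Cnt Y k m) = fv1s Y"
| "fv1 (Sub Y Z) = fv1s Y \<union> fv1s Z"
| "fv1 (Sng Y) = fv1s Y"
| "fv1 (Neg \<phi>) = fv1 \<phi>"
| "fv1 (Conj \<phi> \<psi>) = fv1 \<phi> \<union> fv1 \<psi>"
| "fv1 (Ex1 i \<phi>) = fv1 \<phi> - {i}"
| "fv1 (Ex2 i \<phi>) = fv1 \<phi>"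
| "fv1s (SV i) = {}"
| "fv1s (SC \<psi>) = {}"

fun fv2 :: "'a fm \<Rightarrow> nat set" and fv2s :: "'a st \<Rightarrow> nat set" where
  "fv2 (Eq s t) = {}"
| "fv2 (LabA a t) = {}"
| "fv2 (IncA i s t) = {}"
| "fv2 (Mem t Y) = fv2s Y"
| "fv2 (Cnt Y k m) = fv2s Y"
| "fv2 (Sub Y Z) = fv2s Y \<union> fv2s Z"
| "fv2 (Sng Y) = fv2s Y"
| "fv2 (Neg \<phi>) = fv2 \<phi>"
| "fv2 (Conj \<phi> \<psi>) = fv2 \<phi> \<union> fv2 \<psi>"
| "fv2 (Ex1 i \<phi>) = fv2 \<phi>"
| "fv2 (Ex2 i \<phi>) = fv2 \<phi> - {i}"
| "fv2s (SV i) = {i}"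
| "fv2s (SC \<psi>) = {}"

text \<open>Quantifier-free first-order formulas (allowed inside set constants).\<close>
fun qf_fo :: "'a fm \<Rightarrow> bool" where
  "qf_fo (Eq s t) = True"
| "qf_fo (LabA a t) = True"
| "qf_fo (IncA i s t) = True"
| "qf_fo (Neg \<phi>) = qf_fo \<phi>"
| "qf_fo (Conj \<phi> \<psi>) = (qf_fo \<phi> \<and> qf_fo \<psi>)"
| "qf_fo _ = False"

fun wf :: "'a voc \<Rightarrow> 'a fm \<Rightarrow> bool" and wfs :: "'a voc \<Rightarrow> 'a st \<Rightarrow> bool" where
  "wf Vc (Eq s t) = (tconsts s \<union> tconsts t \<subseteq> {1..snd (snd Vc)})"
| "wf Vc (LabA a t) = (a \<in> fst Vc \<and> tconsts t \<subseteq> {1..snd (snd Vc)})"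
| "wf Vc (IncA i s t) = (i \<in> {1..fst (snd Vc)} \<and> tconsts s \<union> tconsts t \<subseteq> {1..snd (snd Vc)})"
| "wf Vc (Mem t Y) = (tconsts t \<subseteq> {1..snd (snd Vc)} \<and> wfs Vc Y)"
| "wf Vc (Cnt Y k m) = (0 < m \<and> wfs Vc Y)"
| "wf Vc (Sub Y Z) = (wfs Vc Y \<and> wfs Vc Z)"
| "wf Vc (Sng Y) = wfs Vc Y"
| "wf Vc (Neg \<phi>) = wf Vc \<phi>"
| "wf Vc (Conj \<phi> \<psi>) = (wf Vc \<phi> \<and> wf Vc \<psi>)"
| "wf Vc (Ex1 i \<phi>) = wf Vc \<phi>"
| "wf Vc (Ex2 i \<phi>) = wf Vc \<phi>"
| "wfs Vc (SV i) = True"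
| "wfs Vc (SC \<psi>) = (qf_fo \<psi> \<and> fv1 \<psi> \<subseteq> {0} \<and> wf Vc \<psi>)"

fun qr :: "'a fm \<Rightarrow> nat" where
  "qr (Neg \<phi>) = qr \<phi>"
| "qr (Conj \<phi> \<psi>) = max (qr \<phi>) (qr \<psi>)"
| "qr (Ex1 i \<phi>) = Suc (qr \<phi>)"
| "qr (Ex2 i \<phi>) = Suc (qr \<phi>)"
| "qr _ = 0"

text \<open>Moduli used (set constants are quantifier-free first-order, so contain none).\<close>
fun mods :: "'a fm \<Rightarrow> nat set" where
  "mods (Cnt Y k m) = {m}"
| "mods (Neg \<phi>) = mods \<phi>"
| "mods (Conj \<phi> \<psi>) = mods \<phi> \<union> mods \<psi>"
| "mods (Ex1 i \<phi>) = mods \<phi>"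
| "mods (Ex2 i \<phi>) = mods \<phi>"
| "mods _ = {}"

definition sentence :: "'a voc \<Rightarrow> 'a fm \<Rightarrow> bool" where
  "sentence Vc \<phi> \<longleftrightarrow> wf Vc \<phi> \<and> fv1 \<phi> = {} \<and> fv2 \<phi> = {}"

definition models :: "('u, 'a) model \<Rightarrow> 'a fm \<Rightarrow> bool" where
  "models A \<phi> \<longleftrightarrow> sat A (\<lambda>_. undefined) (\<lambda>_. {}) \<phi>"

definition rM_equiv :: "'a voc \<Rightarrow> nat \<Rightarrow> nat set \<Rightarrow> ('u, 'a) model \<Rightarrow> ('w, 'a) model \<Rightarrow> bool" where
  "rM_equiv Vc r M A B \<longleftrightarrow>
     (\<forall>\<phi>. sentence Vc \<phi> \<and> qr \<phi> \<le> r \<and> mods \<phi> \<subseteq> M \<longrightarrow> (models A \<phi> \<longleftrightarrow> models B \<phi>))"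

definition in_domain :: "'a set \<Rightarrow> ('a \<Rightarrow> nat) \<Rightarrow> 'x set \<Rightarrow> ('x \<Rightarrow> nat)
    \<Rightarrow> ('x \<Rightarrow> ('v + 'e, 'a) model) \<Rightarrow> bool" where
  "in_domain S arS X arX A \<longleftrightarrow>
     (\<forall>x\<in>X. \<exists>K :: ('v, 'e, 'a) hg. is_hg S arS K \<and> arity K = arX x \<and> A x = model_of K)"

definition compatible :: "'a set \<Rightarrow> ('a \<Rightarrow> nat) \<Rightarrow> 'x set \<Rightarrow> ('x \<Rightarrow> nat) \<Rightarrow> nat
    \<Rightarrow> (('x \<Rightarrow> ('v + 'e, 'a) model) \<Rightarrow> ('w, 'a) model) \<Rightarrow> bool" where
  "compatible S arS X arX n f \<longleftrightarrow>
     (\<forall>r M A B. in_domain S arS X arX A \<and> in_domain S arS X arX B \<and>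
        (\<forall>x\<in>X. rM_equiv (voc S arS (arX x)) r M (A x) (B x))
        \<longrightarrow> rM_equiv (voc S arS n) r M (f A) (f B))"

end

theory Submission
  imports Defs
begin

lemma coinc:
  shows "wf Vc \<phi> \<Longrightarrow> (\<forall>a\<in>fv1 \<phi>. \<rho> a = \<rho>0 a) \<Longrightarrow> sat A \<rho> \<sigma> \<phi> = sat A \<rho>0 \<sigma> \<phi>"
    and "wfs Vc Y \<Longrightarrow> (\<forall>a\<in>fv1s Y. \<rho> a = \<rho>0 a) \<Longrightarrow> sset A \<rho> \<sigma> Y = sset A \<rho>0 \<sigma> Y"
proof (induction \<phi> and Y arbitrary: \<rho> \<rho>0 \<sigma> and \<rho> \<rho>0 \<sigma>)
  case (Eq s t) then show ?case by (cases s; cases t; auto)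
next
  case (LabA a t) then show ?case by (cases t; auto)
next
  case (IncA i s t) then show ?case by (cases s; cases t; auto)
next
  case (Mem t Y) then show ?case by (cases t; auto)
next
  case (Ex1 i \<phi>)
  have "\<And>u. sat A (\<rho>(i:=u)) \<sigma> \<phi> = sat A (\<rho>0(i:=u)) \<sigma> \<phi>"
    using Ex1 by (intro Ex1.IH) auto
  then show ?case by simp
next
  case (SC \<psi>)
  have "\<And>u. sat A (\<rho>(0:=u)) \<sigma> \<psi> = sat A (\<rho>0(0:=u)) \<sigma> \<psi>"
    using SC by (intro SC.IH) auto
  then show ?case by simp
next
  case (Cnt Y k m)
  then have "sset A \<rho> \<sigma> Y = sset A \<rho>0 \<sigma> Y" by (intro Cnt.IH) auto
  then show ?case by simp
next
  case (Sub Y Z)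
  then have "sset A \<rho> \<sigma> Y = sset A \<rho>0 \<sigma> Y" "sset A \<rho> \<sigma> Z = sset A \<rho>0 \<sigma> Z" by (intro Sub.IH; auto)+
  then show ?case by simp
next
  case (Sng Y)
  then have "sset A \<rho> \<sigma> Y = sset A \<rho>0 \<sigma> Y" by (intro Sng.IH) auto
  then show ?case by simp
next
  case (Conj \<phi> \<psi>)
  then have "sat A \<rho> \<sigma> \<phi> = sat A \<rho>0 \<sigma> \<phi>" "sat A \<rho> \<sigma> \<psi> = sat A \<rho>0 \<sigma> \<psi>" by (intro Conj.IH; auto)+
  then show ?case by simp
qed auto

definition Eqv :: "'a voc \<Rightarrow> nat \<Rightarrow> nat set \<Rightarrow> nat set \<Rightarrow> nat set \<Rightarrow> ('u,'a) model \<Rightarrow> (nat \<Rightarrow> 'u) \<Rightarrow> (nat \<Rightarrow> 'u set)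
   \<Rightarrow> ('w,'a) model \<Rightarrow> (nat \<Rightarrow> 'w) \<Rightarrow> (nat \<Rightarrow> 'w set) \<Rightarrow> bool" where
  "Eqv Vc r M D D2 A \<rho> \<sigma> B \<rho>' \<sigma>' \<longleftrightarrow> (\<forall>\<phi>. wf Vc \<phi> \<and> qr \<phi> \<le> r \<and> mods \<phi> \<subseteq> M \<and> fv1 \<phi> \<subseteq> D \<and> fv2 \<phi> \<subseteq> D2
      \<longrightarrow> (sat A \<rho> \<sigma> \<phi> \<longleftrightarrow> sat B \<rho>' \<sigma>' \<phi>))"

lemma EqvD: "Eqv Vc r M D D2 A \<rho> \<sigma> B \<rho>' \<sigma>' \<Longrightarrow> wf Vc \<phi> \<Longrightarrow> qr \<phi> \<le> r \<Longrightarrow> mods \<phi> \<subseteq> M \<Longrightarrow> fv1 \<phi> \<subseteq> D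
  \<Longrightarrow> fv2 \<phi> \<subseteq> D2 \<Longrightarrow> sat A \<rho> \<sigma> \<phi> \<longleftrightarrow> sat B \<rho>' \<sigma>' \<phi>"
  unfolding Eqv_def by blast

lemma Eqv_sym: "Eqv Vc r M D D2 A \<rho> \<sigma> B \<rho>' \<sigma>' \<Longrightarrow> Eqv Vc r M D D2 B \<rho>' \<sigma>' A \<rho> \<sigma>"
  unfolding Eqv_def by blast

lemma Eqv_weaken:
  assumes "Eqv Vc r M D D2 A \<rho> \<sigma> B \<rho>' \<sigma>'" "r0 \<le> r" "D0 \<subseteq> D"
    "\<forall>a\<in>D0. \<rho>0 a = \<rho> a" "\<forall>a\<in>D0. \<rho>0' a = \<rho>' a"
  shows "Eqv Vc r0 M D0 D2 A \<rho>0 \<sigma> B \<rho>0' \<sigma>'"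
  unfolding Eqv_def
proof (intro allI impI)
  fix \<phi> assume h: "wf Vc \<phi> \<and> qr \<phi> \<le> r0 \<and> mods \<phi> \<subseteq> M \<and> fv1 \<phi> \<subseteq> D0 \<and> fv2 \<phi> \<subseteq> D2"
  have "sat A \<rho>0 \<sigma> \<phi> = sat A \<rho> \<sigma> \<phi>" using h assms(4) by (intro coinc(1)) auto
  moreover have "sat B \<rho>0' \<sigma>' \<phi> = sat B \<rho>' \<sigma>' \<phi>" using h assms(5) by (intro coinc(1)) auto
  moreover have "sat A \<rho> \<sigma> \<phi> = sat B \<rho>' \<sigma>' \<phi>" using h assms(1-3) unfolding Eqv_def by auto
  ultimately show "sat A \<rho>0 \<sigma> \<phi> = sat B \<rho>0' \<sigma>' \<phi>" by simp
qed

definition TT :: "'a fm" where "TT = Neg (Sng (SC (Neg (Eq (V 0) (V 0)))))"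

lemma TT_props[simp]: "sat A \<rho> \<sigma> TT" "wf Vc TT" "qr TT = 0" "mods TT = {}" "fv1 TT = {}" "fv2 TT = {}" "qf_fo TT = False"
  by (auto simp: TT_def)

fun conjs :: "'a fm list \<Rightarrow> 'a fm" where
  "conjs [] = TT"
| "conjs (\<phi> # \<phi>s) = Conj \<phi> (conjs \<phi>s)"

lemma conjs_props:
  "sat A \<rho> \<sigma> (conjs \<phi>s) \<longleftrightarrow> (\<forall>\<phi>\<in>set \<phi>s. sat A \<rho> \<sigma> \<phi>)"
  "wf Vc (conjs \<phi>s) \<longleftrightarrow> (\<forall>\<phi>\<in>set \<phi>s. wf Vc \<phi>)"
  "qr (conjs \<phi>s) \<le> r \<longleftrightarrow> (\<forall>\<phi>\<in>set \<phi>s. qr \<phi> \<le> r)"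
  "mods (conjs \<phi>s) = (\<Union>\<phi>\<in>set \<phi>s. mods \<phi>)"
  "fv1 (conjs \<phi>s) = (\<Union>\<phi>\<in>set \<phi>s. fv1 \<phi>)"
  "fv2 (conjs \<phi>s) = (\<Union>\<phi>\<in>set \<phi>s. fv2 \<phi>)"
  by (induction \<phi>s) auto

lemma distinguish:
  assumes "finite W"
    and "\<forall>w\<in>W. \<exists>\<phi>. wf Vc \<phi> \<and> qr \<phi> \<le> r \<and> mods \<phi> \<subseteq> M \<and> fv1 \<phi> \<subseteq> D \<and> fv2 \<phi> \<subseteq> D2 \<and>
        sat A \<rho> \<sigma> \<phi> \<and> \<not> sat B (\<rho>' w) (\<sigma>' w) \<phi>"
  shows "\<exists>\<Phi>. wf Vc \<Phi> \<and> qr \<Phi> \<le> r \<and> mods \<Phi> \<subseteq> M \<and> fv1 \<Phi> \<subseteq> D \<and> fv2 \<Phi> \<subseteq> D2 \<and>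
        sat A \<rho> \<sigma> \<Phi> \<and> (\<forall>w\<in>W. \<not> sat B (\<rho>' w) (\<sigma>' w) \<Phi>)"
proof -
  obtain F where F: "\<forall>w\<in>W. wf Vc (F w) \<and> qr (F w) \<le> r \<and> mods (F w) \<subseteq> M \<and> fv1 (F w) \<subseteq> D \<and> fv2 (F w) \<subseteq> D2 \<and>
        sat A \<rho> \<sigma> (F w) \<and> \<not> sat B (\<rho>' w) (\<sigma>' w) (F w)"
    using bchoice[OF assms(2)] by blast
  obtain ws where ws: "set ws = W" using finite_list[OF assms(1)] by blast
  show ?thesis
    by (rule exI[of _ "conjs (map F ws)"]) (use F ws in \<open>auto simp: conjs_props\<close>)
qed

lemma ext_elem:
  assumes E: "Eqv Vc (Suc r) M D D2 A \<rho> \<sigma> B \<rho>' \<sigma>'" and fin: "finite (univ B)" and u: "u \<in> univ A"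
  shows "\<exists>w\<in>univ B. Eqv Vc r M (insert i D) D2 A (\<rho>(i:=u)) \<sigma> B (\<rho>'(i:=w)) \<sigma>'"
proof (rule ccontr)
  assume nt: "\<not> ?thesis"
  then have "\<forall>w\<in>univ B. \<exists>\<phi>. wf Vc \<phi> \<and> qr \<phi> \<le> r \<and> mods \<phi> \<subseteq> M \<and> fv1 \<phi> \<subseteq> insert i D \<and> fv2 \<phi> \<subseteq> D2 \<and>
        sat A (\<rho>(i:=u)) \<sigma> \<phi> \<and> \<not> sat B ((\<lambda>w. \<rho>'(i:=w)) w) ((\<lambda>_. \<sigma>') w) \<phi>"
  proof (intro ballI)
    fix w assume "w \<in> univ B"
    then obtain \<phi> where that: "wf Vc \<phi> \<and> qr \<phi> \<le> r \<and> mods \<phi> \<subseteq> M \<and> fv1 \<phi> \<subseteq> insert i D \<and> fv2 \<phi> \<subseteq> D2"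
      "sat A (\<rho>(i:=u)) \<sigma> \<phi> \<noteq> sat B (\<rho>'(i:=w)) \<sigma>' \<phi>" using nt unfolding Eqv_def by blast
    then show "\<exists>\<phi>. wf Vc \<phi> \<and> qr \<phi> \<le> r \<and> mods \<phi> \<subseteq> M \<and> fv1 \<phi> \<subseteq> insert i D \<and> fv2 \<phi> \<subseteq> D2 \<and>
        sat A (\<rho>(i:=u)) \<sigma> \<phi> \<and> \<not> sat B ((\<lambda>w. \<rho>'(i:=w)) w) ((\<lambda>_. \<sigma>') w) \<phi>"
    proof (cases "sat A (\<rho>(i:=u)) \<sigma> \<phi>")
      case True then show ?thesis using that by (intro exI[of _ \<phi>]) auto
    next
      case False then show ?thesis using that by (intro exI[of _ "Neg \<phi>"]) auto
    qed
  qed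
  from distinguish[OF fin this] obtain \<Phi> where P: "wf Vc \<Phi>" "qr \<Phi> \<le> r" "mods \<Phi> \<subseteq> M" "fv1 \<Phi> \<subseteq> insert i D" "fv2 \<Phi> \<subseteq> D2"
    "sat A (\<rho>(i:=u)) \<sigma> \<Phi>" "\<forall>w\<in>univ B. \<not> sat B (\<rho>'(i:=w)) \<sigma>' \<Phi>" by auto
  have "sat A \<rho> \<sigma> (Ex1 i \<Phi>)" using P u by auto
  moreover have "sat A \<rho> \<sigma> (Ex1 i \<Phi>) = sat B \<rho>' \<sigma>' (Ex1 i \<Phi>)"
    using P by (intro EqvD[OF E]) auto
  ultimately show False using P by auto
qed

lemma ext_set:
  assumes E: "Eqv Vc (Suc r) M D D2 A \<rho> \<sigma> B \<rho>' \<sigma>'" and fin: "finite (univ B)" and u: "U \<subseteq> univ A"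
  shows "\<exists>W\<subseteq>univ B. Eqv Vc r M D (insert j D2) A \<rho> (\<sigma>(j:=U)) B \<rho>' (\<sigma>'(j:=W))"
proof (rule ccontr)
  assume nt: "\<not> ?thesis"
  then have "\<forall>W\<in>Pow (univ B). \<exists>\<phi>. wf Vc \<phi> \<and> qr \<phi> \<le> r \<and> mods \<phi> \<subseteq> M \<and> fv1 \<phi> \<subseteq> D \<and> fv2 \<phi> \<subseteq> insert j D2 \<and>
        sat A \<rho> (\<sigma>(j:=U)) \<phi> \<and> \<not> sat B ((\<lambda>_. \<rho>') W) ((\<lambda>W. \<sigma>'(j:=W)) W) \<phi>"
  proof (intro ballI)
    fix W assume "W \<in> Pow (univ B)"
    then obtain \<phi> where that: "wf Vc \<phi> \<and> qr \<phi> \<le> r \<and> mods \<phi> \<subseteq> M \<and> fv1 \<phi> \<subseteq> D \<and> fv2 \<phi> \<subseteq> insert j D2"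
      "sat A \<rho> (\<sigma>(j:=U)) \<phi> \<noteq> sat B \<rho>' (\<sigma>'(j:=W)) \<phi>" using nt unfolding Eqv_def by blast
    then show "\<exists>\<phi>. wf Vc \<phi> \<and> qr \<phi> \<le> r \<and> mods \<phi> \<subseteq> M \<and> fv1 \<phi> \<subseteq> D \<and> fv2 \<phi> \<subseteq> insert j D2 \<and>
        sat A \<rho> (\<sigma>(j:=U)) \<phi> \<and> \<not> sat B ((\<lambda>_. \<rho>') W) ((\<lambda>W. \<sigma>'(j:=W)) W) \<phi>"
    proof (cases "sat A \<rho> (\<sigma>(j:=U)) \<phi>")
      case True then show ?thesis using that by (intro exI[of _ \<phi>]) auto
    next
      case False then show ?thesis using that by (intro exI[of _ "Neg \<phi>"]) auto
    qed
  qed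
  from distinguish[OF _ this] fin obtain \<Phi> where P: "wf Vc \<Phi>" "qr \<Phi> \<le> r" "mods \<Phi> \<subseteq> M" "fv1 \<Phi> \<subseteq> D" "fv2 \<Phi> \<subseteq> insert j D2"
    "sat A \<rho> (\<sigma>(j:=U)) \<Phi>" "\<forall>W\<in>Pow (univ B). \<not> sat B \<rho>' (\<sigma>'(j:=W)) \<Phi>" by auto
  have "sat A \<rho> \<sigma> (Ex2 j \<Phi>)" using P u by auto
  moreover have "sat A \<rho> \<sigma> (Ex2 j \<Phi>) = sat B \<rho>' \<sigma>' (Ex2 j \<Phi>)"
    using P by (intro EqvD[OF E]) auto
  ultimately show False using P by auto
qed


fun embed :: "'eg \<Rightarrow> 'v + 'e \<Rightarrow> ('vg + 'eg \<times> 'v) + ('eg \<times> 'e)" where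
  "embed e (Inl v) = Inl (Inr (e, v))"
| "embed e (Inr d) = Inr (e, d)"

fun unembed :: "('vg + 'eg \<times> 'v) + ('eg \<times> 'e) \<Rightarrow> 'v + 'e" where
  "unembed (Inl (Inr (e, v))) = Inl v"
| "unembed (Inr (e, d)) = Inr d"
| "unembed (Inl (Inl g)) = undefined"

fun isG :: "('vg + 'eg \<times> 'v) + ('eg \<times> 'e) \<Rightarrow> bool" where
  "isG (Inl (Inl g)) = True"
| "isG _ = False"

fun eof :: "('vg + 'eg \<times> 'v) + ('eg \<times> 'e) \<Rightarrow> 'eg" where
  "eof (Inl (Inr (e, v))) = e"
| "eof (Inr (e, d)) = e"
| "eof (Inl (Inl g)) = undefined"

definition gp :: "'vg \<Rightarrow> ('vg + 'eg \<times> 'v) + ('eg \<times> 'e)" where "gp g = Inl (Inl g)"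

lemma embed_inj[simp]: "embed e x = embed e' y \<longleftrightarrow> e = e' \<and> x = y"
  by (cases x; cases y; auto)
lemma embed_simps[simp]: "\<not> isG (embed e x)" "eof (embed e x) = e" "unembed (embed e x) = x"
  "embed e x \<noteq> gp g" "gp g \<noteq> embed e x" "isG (gp g)"
  by (cases x; auto simp: gp_def)+
lemma gp_inj[simp]: "gp g = gp g' \<longleftrightarrow> g = g'" by (auto simp: gp_def)
lemma nonG_embed: "\<not> isG u \<Longrightarrow> embed (eof u) (unembed u) = u"
  by (cases u rule: isG.cases) auto
lemma isG_gp: "isG u \<Longrightarrow> \<exists>g. u = gp g"
  by (cases u rule: isG.cases) (auto simp: gp_def)
lemma embed_vimage_gp[simp]: "embed e -` (gp ` A) = {}" by auto

context
  fixes G :: "('vg, 'eg, 'x) hg" and arX :: "'x \<Rightarrow> nat"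
begin

definition ne :: "'eg \<Rightarrow> nat" where "ne e = arX (lab G e)"

definition Cs :: "('x \<Rightarrow> ('u, 'a) model) \<Rightarrow> 'eg \<Rightarrow> 'u set" where
  "Cs A e = cnst (A (lab G e)) ` {1..ne e}"

definition glue :: "('x \<Rightarrow> ('v + 'e, 'a) model) \<Rightarrow> (('vg + 'eg \<times> 'v) + ('eg \<times> 'e), 'a) model" where
  "glue A = \<lparr> univ = gp ` verts G \<union> (\<Union>e\<in>edges G. embed e ` (univ (A (lab G e)) - Cs A e)),
    labrel = (\<lambda>a. \<Union>e\<in>edges G. embed e ` labrel (A (lab G e)) a),
    increl = (\<lambda>i. {(embed e x, embed e y) | e x y. e \<in> edges G \<and> (x, y) \<in> increl (A (lab G e)) i \<and> y \<notin> Cs A e}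
              \<union> {(embed e x, gp (inc G e ! (k - 1))) | e x k. e \<in> edges G \<and> k \<in> {1..ne e}
                     \<and> (x, cnst (A (lab G e)) k) \<in> increl (A (lab G e)) i}),
    cnst = (\<lambda>j. gp (srcs G ! (j - 1))) \<rparr>"

lemma glue_univ_G: "isG u \<Longrightarrow> u \<in> univ (glue A) \<longleftrightarrow> u \<in> gp ` verts G"
  by (auto simp: glue_def)

lemma glue_univ_embed: "embed e x \<in> univ (glue A) \<longleftrightarrow> e \<in> edges G \<and> x \<in> univ (A (lab G e)) \<and> x \<notin> Cs A e"
  by (auto simp: glue_def)

lemma glue_univ_nonG: "\<not> isG u \<Longrightarrow> u \<in> univ (glue A) \<longleftrightarrow> eof u \<in> edges G \<and> unembed u \<in> univ (A (lab G (eof u))) \<and> unembed u \<notin> Cs A (eof u)"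
  by (metis glue_univ_embed nonG_embed)

lemma glue_lab_G: "isG u \<Longrightarrow> u \<notin> labrel (glue A) a"
  by (auto simp: glue_def)

lemma glue_lab_embed: "embed e x \<in> labrel (glue A) a \<longleftrightarrow> e \<in> edges G \<and> x \<in> labrel (A (lab G e)) a"
  by (auto simp: glue_def)

lemma glue_inc_G: "isG u \<Longrightarrow> (u, v) \<notin> increl (glue A) i"
  by (auto simp: glue_def)

lemma glue_inc_embed: "(embed e x, embed e' y) \<in> increl (glue A) i \<longleftrightarrow>
   e = e' \<and> e \<in> edges G \<and> (x, y) \<in> increl (A (lab G e)) i \<and> y \<notin> Cs A e"
  by (auto simp: glue_def)

lemma glue_inc_gp: "(embed e x, gp g) \<in> increl (glue A) i \<longleftrightarrow>
   e \<in> edges G \<and> (\<exists>k\<in>{1..ne e}. inc G e ! (k - 1) = g \<and> (x, cnst (A (lab G e)) k) \<in> increl (A (lab G e)) i)"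
  by (auto simp: glue_def)

lemma glue_cnst: "cnst (glue A) j = gp (srcs G ! (j - 1))"
  by (auto simp: glue_def)

lemma finite_glue:
  assumes "finite (verts G)" "finite (edges G)" "\<forall>e\<in>edges G. finite (univ (A (lab G e)))"
  shows "finite (univ (glue A))"
  using assms by (auto simp: glue_def)

end

definition TTq :: "'a fm" where "TTq = Eq (V 0) (V 0)"
definition FFq :: "'a fm" where "FFq = Neg TTq"

lemma TTq_props[simp]: "sat A \<rho> \<sigma> TTq" "wf Vc TTq" "qr TTq = 0" "mods TTq = {}" "fv1 TTq = {0}" "fv2 TTq = {}" "qf_fo TTq"
  "\<not> sat A \<rho> \<sigma> FFq" "wf Vc FFq" "qr FFq = 0" "mods FFq = {}" "fv1 FFq = {0}" "fv2 FFq = {}" "qf_fo FFq"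
  by (auto simp: TTq_def FFq_def)

fun disj :: "'a fm \<Rightarrow> 'a fm list \<Rightarrow> 'a fm" where
  "disj b [] = b"
| "disj b (\<phi> # \<phi>s) = Neg (Conj (Neg \<phi>) (Neg (disj b \<phi>s)))"

fun conjq :: "'a fm list \<Rightarrow> 'a fm" where
  "conjq [] = TTq"
| "conjq (\<phi> # \<phi>s) = Conj \<phi> (conjq \<phi>s)"

lemma disj_props:
  "\<not> sat A \<rho> \<sigma> b \<Longrightarrow> sat A \<rho> \<sigma> (disj b \<phi>s) \<longleftrightarrow> (\<exists>\<phi>\<in>set \<phi>s. sat A \<rho> \<sigma> \<phi>)"
  "wf Vc (disj b \<phi>s) \<longleftrightarrow> wf Vc b \<and> (\<forall>\<phi>\<in>set \<phi>s. wf Vc \<phi>)"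
  "qf_fo (disj b \<phi>s) \<longleftrightarrow> qf_fo b \<and> (\<forall>\<phi>\<in>set \<phi>s. qf_fo \<phi>)"
  "qr (disj b \<phi>s) = 0 \<longleftrightarrow> qr b = 0 \<and> (\<forall>\<phi>\<in>set \<phi>s. qr \<phi> = 0)"
  "mods (disj b \<phi>s) = mods b \<union> (\<Union>\<phi>\<in>set \<phi>s. mods \<phi>)"
  "fv1 (disj b \<phi>s) = fv1 b \<union> (\<Union>\<phi>\<in>set \<phi>s. fv1 \<phi>)"
  "fv2 (disj b \<phi>s) = fv2 b \<union> (\<Union>\<phi>\<in>set \<phi>s. fv2 \<phi>)"
  by (induction \<phi>s) auto

lemma conjq_props:
  "sat A \<rho> \<sigma> (conjq \<phi>s) \<longleftrightarrow> (\<forall>\<phi>\<in>set \<phi>s. sat A \<rho> \<sigma> \<phi>)"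
  "wf Vc (conjq \<phi>s) \<longleftrightarrow> (\<forall>\<phi>\<in>set \<phi>s. wf Vc \<phi>)"
  "qf_fo (conjq \<phi>s) \<longleftrightarrow> (\<forall>\<phi>\<in>set \<phi>s. qf_fo \<phi>)"
  "fv1 (conjq \<phi>s) = insert 0 (\<Union>\<phi>\<in>set \<phi>s. fv1 \<phi>)"
  by (induction \<phi>s) auto

context
  fixes G :: "('vg, 'eg, 'x) hg" and arX :: "'x \<Rightarrow> nat"
    and S :: "'a set" and arS :: "'a \<Rightarrow> nat" and M :: "nat set"
begin

definition Dof :: "(nat \<Rightarrow> ('vg + 'eg \<times> 'v) + ('eg \<times> 'e)) \<Rightarrow> nat set \<Rightarrow> 'eg \<Rightarrow> nat set" where
  "Dof \<rho> D e = {i\<in>D. \<not> isG (\<rho> i) \<and> eof (\<rho> i) = e}"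

abbreviation cvoc :: "'eg \<Rightarrow> 'a voc" where "cvoc e \<equiv> voc S arS (ne G arX e)"

definition Inv :: "('x \<Rightarrow> ('v + 'e, 'a) model) \<Rightarrow> ('x \<Rightarrow> ('v + 'e, 'a) model) \<Rightarrow> nat \<Rightarrow> nat set \<Rightarrow> nat set
   \<Rightarrow> (nat \<Rightarrow> ('vg + 'eg \<times> 'v) + ('eg \<times> 'e)) \<Rightarrow> (nat \<Rightarrow> (('vg + 'eg \<times> 'v) + ('eg \<times> 'e)) set)
   \<Rightarrow> (nat \<Rightarrow> ('vg + 'eg \<times> 'v) + ('eg \<times> 'e)) \<Rightarrow> (nat \<Rightarrow> (('vg + 'eg \<times> 'v) + ('eg \<times> 'e)) set) \<Rightarrow> bool" where
  "Inv A B r D D2 \<rho> \<sigma> \<rho>' \<sigma>' \<longleftrightarrow>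
    (\<forall>i\<in>D. \<rho> i \<in> univ (glue G arX A) \<and> \<rho>' i \<in> univ (glue G arX B)) \<and>
    (\<forall>i\<in>D. isG (\<rho> i) \<longleftrightarrow> isG (\<rho>' i)) \<and>
    (\<forall>i\<in>D. isG (\<rho> i) \<longrightarrow> \<rho> i = \<rho>' i) \<and>
    (\<forall>i\<in>D. \<not> isG (\<rho> i) \<longrightarrow> eof (\<rho> i) = eof (\<rho>' i)) \<and>
    (\<forall>j\<in>D2. \<sigma> j \<subseteq> univ (glue G arX A) \<and> \<sigma>' j \<subseteq> univ (glue G arX B) \<and> {u\<in>\<sigma> j. isG u} = {u\<in>\<sigma>' j. isG u}) \<and>
    (\<forall>e\<in>edges G. Eqv (cvoc e) r M (Dof \<rho> D e) D2 (A (lab G e)) (unembed \<circ> \<rho>) (\<lambda>j. embed e -` \<sigma> j)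
        (B (lab G e)) (unembed \<circ> \<rho>') (\<lambda>j. embed e -` \<sigma>' j))"

lemma InvD:
  assumes "Inv A B r D D2 \<rho> \<sigma> \<rho>' \<sigma>'"
  shows "\<forall>i\<in>D. \<rho> i \<in> univ (glue G arX A) \<and> \<rho>' i \<in> univ (glue G arX B)"
    "\<forall>i\<in>D. isG (\<rho> i) \<longleftrightarrow> isG (\<rho>' i)"
    "\<forall>i\<in>D. isG (\<rho> i) \<longrightarrow> \<rho> i = \<rho>' i"
    "\<forall>i\<in>D. \<not> isG (\<rho> i) \<longrightarrow> eof (\<rho> i) = eof (\<rho>' i)"
    "\<forall>j\<in>D2. \<sigma> j \<subseteq> univ (glue G arX A) \<and> \<sigma>' j \<subseteq> univ (glue G arX B) \<and> {u\<in>\<sigma> j. isG u} = {u\<in>\<sigma>' j. isG u}"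
    "\<forall>e\<in>edges G. Eqv (cvoc e) r M (Dof \<rho> D e) D2 (A (lab G e)) (unembed \<circ> \<rho>) (\<lambda>j. embed e -` \<sigma> j)
        (B (lab G e)) (unembed \<circ> \<rho>') (\<lambda>j. embed e -` \<sigma>' j)"
  using assms unfolding Inv_def
  by (rule conjunct1, rule conjunct1[OF conjunct2], rule conjunct1[OF conjunct2[OF conjunct2]],
      rule conjunct1[OF conjunct2[OF conjunct2[OF conjunct2]]],
      rule conjunct1[OF conjunct2[OF conjunct2[OF conjunct2[OF conjunct2]]]],
      rule conjunct2[OF conjunct2[OF conjunct2[OF conjunct2[OF conjunct2]]]])

lemma InvI:
  assumes "\<forall>i\<in>D. \<rho> i \<in> univ (glue G arX A) \<and> \<rho>' i \<in> univ (glue G arX B)"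
    "\<forall>i\<in>D. isG (\<rho> i) \<longleftrightarrow> isG (\<rho>' i)"
    "\<forall>i\<in>D. isG (\<rho> i) \<longrightarrow> \<rho> i = \<rho>' i"
    "\<forall>i\<in>D. \<not> isG (\<rho> i) \<longrightarrow> eof (\<rho> i) = eof (\<rho>' i)"
    "\<forall>j\<in>D2. \<sigma> j \<subseteq> univ (glue G arX A) \<and> \<sigma>' j \<subseteq> univ (glue G arX B) \<and> {u\<in>\<sigma> j. isG u} = {u\<in>\<sigma>' j. isG u}"
    "\<forall>e\<in>edges G. Eqv (cvoc e) r M (Dof \<rho> D e) D2 (A (lab G e)) (unembed \<circ> \<rho>) (\<lambda>j. embed e -` \<sigma> j)
        (B (lab G e)) (unembed \<circ> \<rho>') (\<lambda>j. embed e -` \<sigma>' j)"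
  shows "Inv A B r D D2 \<rho> \<sigma> \<rho>' \<sigma>'"
  unfolding Inv_def using assms by (intro conjI)

lemma Dof_eq: "Inv A B r D D2 \<rho> \<sigma> \<rho>' \<sigma>' \<Longrightarrow> Dof \<rho>' D e = Dof \<rho> D e"
proof -
  assume I: "Inv A B r D D2 \<rho> \<sigma> \<rho>' \<sigma>'"
  note h = InvD(2,4)[OF I]
  show ?thesis unfolding Dof_def using h by (intro Collect_cong) metis
qed

lemma Inv_sym: "Inv A B r D D2 \<rho> \<sigma> \<rho>' \<sigma>' \<Longrightarrow> Inv B A r D D2 \<rho>' \<sigma>' \<rho> \<sigma>"
proof -
  assume I: "Inv A B r D D2 \<rho> \<sigma> \<rho>' \<sigma>'"
  note De = Dof_eq[OF I]
  note h = InvD[OF I]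
  have h2: "\<forall>i\<in>D. \<rho>' i \<in> univ (glue G arX B) \<and> \<rho> i \<in> univ (glue G arX A)"
    "\<forall>i\<in>D. isG (\<rho>' i) \<longleftrightarrow> isG (\<rho> i)"
    "\<forall>i\<in>D. isG (\<rho>' i) \<longrightarrow> \<rho>' i = \<rho> i"
    "\<forall>i\<in>D. \<not> isG (\<rho>' i) \<longrightarrow> eof (\<rho>' i) = eof (\<rho> i)"
    "\<forall>j\<in>D2. \<sigma>' j \<subseteq> univ (glue G arX B) \<and> \<sigma> j \<subseteq> univ (glue G arX A) \<and> {u\<in>\<sigma>' j. isG u} = {u\<in>\<sigma> j. isG u}"
    "\<forall>e\<in>edges G. Eqv (cvoc e) r M (Dof \<rho>' D e) D2 (B (lab G e)) (unembed \<circ> \<rho>') (\<lambda>j. embed e -` \<sigma>' j)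
        (A (lab G e)) (unembed \<circ> \<rho>) (\<lambda>j. embed e -` \<sigma> j)"
    subgoal using h(1) by simp
    subgoal using h(2) by simp
    subgoal using h(2,3) by simp
    subgoal using h(2,4) by simp
    subgoal using h(5) by simp
    subgoal unfolding De using h(6) by (simp add: Eqv_sym)
    done
  then show ?thesis by (intro InvI)
qed

lemma comp_eq:
  assumes I: "Inv A B r D D2 \<rho> \<sigma> \<rho>' \<sigma>'" and e: "e \<in> edges G"
    and "wf (cvoc e) \<chi>" "qr \<chi> = 0" "mods \<chi> \<subseteq> M" "fv1 \<chi> \<subseteq> Dof \<rho> D e" "fv2 \<chi> \<subseteq> D2"
  shows "sat (A (lab G e)) (unembed \<circ> \<rho>) (\<lambda>j. embed e -` \<sigma> j) \<chi> \<longleftrightarrow>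
         sat (B (lab G e)) (unembed \<circ> \<rho>') (\<lambda>j. embed e -` \<sigma>' j) \<chi>"
proof -
  have "Eqv (cvoc e) r M (Dof \<rho> D e) D2 (A (lab G e)) (unembed \<circ> \<rho>) (\<lambda>j. embed e -` \<sigma> j)
        (B (lab G e)) (unembed \<circ> \<rho>') (\<lambda>j. embed e -` \<sigma>' j)" using InvD(6)[OF I] e by blast
  from EqvD[OF this assms(3)] show ?thesis using assms(4-7) by simp
qed

lemma term_loc:
  assumes I: "Inv A B r D D2 \<rho> \<sigma> \<rho>' \<sigma>'" and t: "tvars t \<subseteq> D"
  shows "isG (tm (glue G arX A) \<rho> t) = isG (tm (glue G arX B) \<rho>' t)"
    "isG (tm (glue G arX A) \<rho> t) \<Longrightarrow> tm (glue G arX A) \<rho> t = tm (glue G arX B) \<rho>' t"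
    "\<not> isG (tm (glue G arX A) \<rho> t) \<Longrightarrow> \<exists>i. t = V i \<and> i \<in> Dof \<rho> D (eof (\<rho> i)) \<and> eof (\<rho>' i) = eof (\<rho> i)
        \<and> eof (\<rho> i) \<in> edges G \<and> \<rho> i \<in> univ (glue G arX A) \<and> \<rho>' i \<in> univ (glue G arX B)"
proof (atomize (full), cases t)
  case (C j)
  then show "(isG (tm (glue G arX A) \<rho> t) = isG (tm (glue G arX B) \<rho>' t)) \<and>
    (isG (tm (glue G arX A) \<rho> t) \<longrightarrow> tm (glue G arX A) \<rho> t = tm (glue G arX B) \<rho>' t) \<and>
    (\<not> isG (tm (glue G arX A) \<rho> t) \<longrightarrow> (\<exists>i. t = V i \<and> i \<in> Dof \<rho> D (eof (\<rho> i)) \<and> eof (\<rho>' i) = eof (\<rho> i)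
        \<and> eof (\<rho> i) \<in> edges G \<and> \<rho> i \<in> univ (glue G arX A) \<and> \<rho>' i \<in> univ (glue G arX B)))"
    by (simp add: glue_cnst)
next
  case (V i)
  then have iD: "i \<in> D" using t by simp
  have h: "\<rho> i \<in> univ (glue G arX A)" "\<rho>' i \<in> univ (glue G arX B)"
    "isG (\<rho> i) \<longleftrightarrow> isG (\<rho>' i)" "isG (\<rho> i) \<longrightarrow> \<rho> i = \<rho>' i" "\<not> isG (\<rho> i) \<longrightarrow> eof (\<rho> i) = eof (\<rho>' i)"
    using I iD unfolding Inv_def by blast+
  have "\<not> isG (\<rho> i) \<Longrightarrow> eof (\<rho> i) \<in> edges G" using h(1) glue_univ_nonG by blast
  then show "(isG (tm (glue G arX A) \<rho> t) = isG (tm (glue G arX B) \<rho>' t)) \<and>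
    (isG (tm (glue G arX A) \<rho> t) \<longrightarrow> tm (glue G arX A) \<rho> t = tm (glue G arX B) \<rho>' t) \<and>
    (\<not> isG (tm (glue G arX A) \<rho> t) \<longrightarrow> (\<exists>i. t = V i \<and> i \<in> Dof \<rho> D (eof (\<rho> i)) \<and> eof (\<rho>' i) = eof (\<rho> i)
        \<and> eof (\<rho> i) \<in> edges G \<and> \<rho> i \<in> univ (glue G arX A) \<and> \<rho>' i \<in> univ (glue G arX B)))"
    using V h iD unfolding Dof_def by simp
qed

lemma nonG_eq: "\<not> isG u \<Longrightarrow> \<not> isG v \<Longrightarrow> (u = v \<longleftrightarrow> eof u = eof v \<and> unembed u = unembed v)"
  by (metis nonG_embed)

lemma atom_Eq:
  assumes I: "Inv A B r D D2 \<rho> \<sigma> \<rho>' \<sigma>'" and st: "tvars s \<union> tvars t \<subseteq> D"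
  shows "sat (glue G arX A) \<rho> \<sigma> (Eq s t) \<longleftrightarrow> sat (glue G arX B) \<rho>' \<sigma>' (Eq s t)"
proof -
  have s: "tvars s \<subseteq> D" and t: "tvars t \<subseteq> D" using st by auto
  note Ls = term_loc[OF I s] and Lt = term_loc[OF I t]
  show ?thesis
  proof (cases "isG (tm (glue G arX A) \<rho> s)")
    case sG: True
    show ?thesis
    proof (cases "isG (tm (glue G arX A) \<rho> t)")
      case True then show ?thesis using sG Ls Lt by simp
    next
      case False then show ?thesis using sG Ls(1,2) Lt(1) by auto
    qed
  next
    case sN: False
    obtain i where i: "s = V i" "i \<in> Dof \<rho> D (eof (\<rho> i))" "eof (\<rho>' i) = eof (\<rho> i)" "eof (\<rho> i) \<in> edges G"
      using Ls(3)[OF sN] by blast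
    show ?thesis
    proof (cases "isG (tm (glue G arX A) \<rho> t)")
      case True then show ?thesis using sN Lt(1,2) Ls(1) by auto
    next
      case tN: False
      obtain j where j: "t = V j" "j \<in> Dof \<rho> D (eof (\<rho> j))" "eof (\<rho>' j) = eof (\<rho> j)"
        using Lt(3)[OF tN] by blast
      have nG: "\<not> isG (\<rho> i)" "\<not> isG (\<rho> j)" "\<not> isG (\<rho>' i)" "\<not> isG (\<rho>' j)"
        using sN tN Ls(1) Lt(1) i j by auto
      show ?thesis
      proof (cases "eof (\<rho> j) = eof (\<rho> i)")
        case True
        have "sat (A (lab G (eof (\<rho> i)))) (unembed \<circ> \<rho>) (\<lambda>j. embed (eof (\<rho> i)) -` \<sigma> j) (Eq (V i) (V j)) \<longleftrightarrow>
              sat (B (lab G (eof (\<rho> i)))) (unembed \<circ> \<rho>') (\<lambda>j. embed (eof (\<rho> i)) -` \<sigma>' j) (Eq (V i) (V j))"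
          using i j True by (intro comp_eq[OF I]) auto
        then show ?thesis using i j True nG by (simp add: nonG_eq)
      next
        case False
        then show ?thesis using i j nG by (auto simp: nonG_eq)
      qed
    qed
  qed
qed

lemma atom_Lab:
  assumes I: "Inv A B r D D2 \<rho> \<sigma> \<rho>' \<sigma>'" and t: "tvars t \<subseteq> D" and a: "a \<in> S"
  shows "sat (glue G arX A) \<rho> \<sigma> (LabA a t) \<longleftrightarrow> sat (glue G arX B) \<rho>' \<sigma>' (LabA a t)"
proof -
  note Lt = term_loc[OF I t]
  show ?thesis
  proof (cases "isG (tm (glue G arX A) \<rho> t)")
    case True then show ?thesis using Lt(1) by (simp add: glue_lab_G)
  next
    case tN: False
    obtain i where i: "t = V i" "i \<in> Dof \<rho> D (eof (\<rho> i))" "eof (\<rho>' i) = eof (\<rho> i)" "eof (\<rho> i) \<in> edges G"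
      using Lt(3)[OF tN] by blast
    have nG: "\<not> isG (\<rho> i)" "\<not> isG (\<rho>' i)" using tN Lt(1) i by auto
    have ri: "\<rho> i = embed (eof (\<rho> i)) (unembed (\<rho> i))" "\<rho>' i = embed (eof (\<rho> i)) (unembed (\<rho>' i))"
      using nonG_embed[OF nG(1)] nonG_embed[OF nG(2)] i by auto
    have "sat (A (lab G (eof (\<rho> i)))) (unembed \<circ> \<rho>) (\<lambda>j. embed (eof (\<rho> i)) -` \<sigma> j) (LabA a (V i)) \<longleftrightarrow>
          sat (B (lab G (eof (\<rho> i)))) (unembed \<circ> \<rho>') (\<lambda>j. embed (eof (\<rho> i)) -` \<sigma>' j) (LabA a (V i))"
      using i a by (intro comp_eq[OF I]) (auto simp: voc_def)
    moreover have "\<rho> i \<in> labrel (glue G arX A) a \<longleftrightarrow> unembed (\<rho> i) \<in> labrel (A (lab G (eof (\<rho> i)))) a"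
      by (subst ri(1)) (use i in \<open>simp add: glue_lab_embed\<close>)
    moreover have "\<rho>' i \<in> labrel (glue G arX B) a \<longleftrightarrow> unembed (\<rho>' i) \<in> labrel (B (lab G (eof (\<rho> i)))) a"
      by (subst ri(2)) (use i in \<open>simp add: glue_lab_embed\<close>)
    ultimately show ?thesis using i by simp
  qed
qed

lemma atom_Inc:
  assumes I: "Inv A B r D D2 \<rho> \<sigma> \<rho>' \<sigma>'" and st: "tvars s \<union> tvars t \<subseteq> D" and k: "k \<in> {1..maxar S arS}"
  shows "sat (glue G arX A) \<rho> \<sigma> (IncA k s t) \<longleftrightarrow> sat (glue G arX B) \<rho>' \<sigma>' (IncA k s t)"
proof -
  have s: "tvars s \<subseteq> D" and t: "tvars t \<subseteq> D" using st by auto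
  note Ls = term_loc[OF I s] and Lt = term_loc[OF I t]
  show ?thesis
  proof (cases "isG (tm (glue G arX A) \<rho> s)")
    case True then show ?thesis using Ls(1) by (simp add: glue_inc_G)
  next
    case sN: False
    obtain i where i: "s = V i" "i \<in> Dof \<rho> D (eof (\<rho> i))" "eof (\<rho>' i) = eof (\<rho> i)" "eof (\<rho> i) \<in> edges G"
      using Ls(3)[OF sN] by blast
    define e where "e = eof (\<rho> i)"
    have nG: "\<not> isG (\<rho> i)" "\<not> isG (\<rho>' i)" using sN Ls(1) i by auto
    have ri: "\<rho> i = embed e (unembed (\<rho> i))" "\<rho>' i = embed e (unembed (\<rho>' i))"
      using nonG_embed[OF nG(1)] nonG_embed[OF nG(2)] i unfolding e_def by auto
    have ie: "i \<in> Dof \<rho> D e" "e \<in> edges G" using i e_def by auto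
    show ?thesis
    proof (cases "isG (tm (glue G arX A) \<rho> t)")
      case tG: True
      obtain g where g: "tm (glue G arX A) \<rho> t = gp g" using isG_gp[OF tG] by blast
      have g': "tm (glue G arX B) \<rho>' t = gp g" using Lt(2)[OF tG] g by simp
      define \<chi> :: "'a fm" where "\<chi> = disj (Neg TT) (map (\<lambda>k'. IncA k (V i) (C k')) (filter (\<lambda>k'. inc G e ! (k' - 1) = g) [1..<Suc (ne G arX e)]))"
      have "sat (A (lab G e)) (unembed \<circ> \<rho>) (\<lambda>j. embed e -` \<sigma> j) \<chi> \<longleftrightarrow>
            sat (B (lab G e)) (unembed \<circ> \<rho>') (\<lambda>j. embed e -` \<sigma>' j) \<chi>"
        using ie k unfolding \<chi>_def by (intro comp_eq[OF I]) (auto simp: voc_def disj_props)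
      moreover have "sat (A (lab G e)) (unembed \<circ> \<rho>) \<sigma>0 \<chi> \<longleftrightarrow> (\<rho> i, gp g) \<in> increl (glue G arX A) k" for \<sigma>0
        unfolding \<chi>_def by (subst ri(1), subst glue_inc_gp) (auto simp: disj_props ie(2))
      moreover have "sat (B (lab G e)) (unembed \<circ> \<rho>') \<sigma>0 \<chi> \<longleftrightarrow> (\<rho>' i, gp g) \<in> increl (glue G arX B) k" for \<sigma>0
        unfolding \<chi>_def by (subst ri(2), subst glue_inc_gp) (auto simp: disj_props ie(2))
      ultimately show ?thesis using g g' i by simp
    next
      case tN: False
      obtain j where j: "t = V j" "j \<in> Dof \<rho> D (eof (\<rho> j))" "eof (\<rho>' j) = eof (\<rho> j)"
         "\<rho> j \<in> univ (glue G arX A)" "\<rho>' j \<in> univ (glue G arX B)"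
        using Lt(3)[OF tN] by blast
      have nGj: "\<not> isG (\<rho> j)" "\<not> isG (\<rho>' j)" using tN Lt(1) j by auto
      have rj: "\<rho> j = embed (eof (\<rho> j)) (unembed (\<rho> j))" "\<rho>' j = embed (eof (\<rho> j)) (unembed (\<rho>' j))"
        using nonG_embed[OF nGj(1)] nonG_embed[OF nGj(2)] j by auto
      have nc: "unembed (\<rho> j) \<notin> Cs G arX A (eof (\<rho> j))" "unembed (\<rho>' j) \<notin> Cs G arX B (eof (\<rho> j))"
        using j nGj by (auto simp: glue_univ_nonG)
      show ?thesis
      proof (cases "eof (\<rho> j) = e")
        case True
        have "sat (A (lab G e)) (unembed \<circ> \<rho>) (\<lambda>j. embed e -` \<sigma> j) (IncA k (V i) (V j)) \<longleftrightarrow>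
              sat (B (lab G e)) (unembed \<circ> \<rho>') (\<lambda>j. embed e -` \<sigma>' j) (IncA k (V i) (V j))"
          using ie k j True by (intro comp_eq[OF I]) (auto simp: voc_def)
        moreover have "(\<rho> i, \<rho> j) \<in> increl (glue G arX A) k \<longleftrightarrow> (unembed (\<rho> i), unembed (\<rho> j)) \<in> increl (A (lab G e)) k"
          by (subst ri(1), subst rj(1)) (use True nc ie in \<open>auto simp: glue_inc_embed\<close>)
        moreover have "(\<rho>' i, \<rho>' j) \<in> increl (glue G arX B) k \<longleftrightarrow> (unembed (\<rho>' i), unembed (\<rho>' j)) \<in> increl (B (lab G e)) k"
          by (subst ri(2), subst rj(2)) (use True nc ie in \<open>auto simp: glue_inc_embed\<close>)
        ultimately show ?thesis using i j by simp
      next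
        case False
        have "(\<rho> i, \<rho> j) \<notin> increl (glue G arX A) k"
          by (subst ri(1), subst rj(1)) (use False in \<open>auto simp: glue_inc_embed\<close>)
        moreover have "(\<rho>' i, \<rho>' j) \<notin> increl (glue G arX B) k"
          by (subst ri(2), subst rj(2)) (use False in \<open>auto simp: glue_inc_embed\<close>)
        ultimately show ?thesis using i j by simp
      qed
    qed
  qed
qed

end

context
  fixes G :: "('vg, 'eg, 'x) hg" and arX :: "'x \<Rightarrow> nat"
    and S :: "'a set" and arS :: "'a \<Rightarrow> nat" and M :: "nat set"
begin

lemma glue_lab_nonG: "\<not> isG u \<Longrightarrow> u \<in> labrel (glue G arX A) a \<longleftrightarrow> eof u \<in> edges G \<and> unembed u \<in> labrel (A (lab G (eof u))) a"
  by (metis glue_lab_embed nonG_embed)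

lemma glue_inc_nonG: "\<not> isG u \<Longrightarrow> \<not> isG v \<Longrightarrow> (u, v) \<in> increl (glue G arX A) i \<longleftrightarrow>
   eof u = eof v \<and> eof u \<in> edges G \<and> (unembed u, unembed v) \<in> increl (A (lab G (eof u))) i \<and> unembed v \<notin> Cs G arX A (eof u)"
  by (metis glue_inc_embed nonG_embed)

lemma glue_inc_nonG_gp: "\<not> isG u \<Longrightarrow> (u, gp g) \<in> increl (glue G arX A) i \<longleftrightarrow>
   eof u \<in> edges G \<and> (\<exists>k\<in>{1..ne G arX (eof u)}. inc G (eof u) ! (k - 1) = g \<and> (unembed u, cnst (A (lab G (eof u))) k) \<in> increl (A (lab G (eof u))) i)"
  by (metis glue_inc_gp nonG_embed)

lemma gp_neq_nonG[simp]: "\<not> isG u \<Longrightarrow> gp g \<noteq> u" "\<not> isG u \<Longrightarrow> u \<noteq> gp g"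
  by (auto simp: gp_def)

fun tr :: "'eg \<Rightarrow> 'b fm \<Rightarrow> 'b fm" where
  "tr e (Eq (V a) (V b)) = Eq (V a) (V b)"
| "tr e (Eq (C j) (C k)) = (if srcs G ! (j - 1) = srcs G ! (k - 1) then TTq else FFq)"
| "tr e (Eq (V a) (C k)) = FFq"
| "tr e (Eq (C j) (V b)) = FFq"
| "tr e (LabA l (V b)) = LabA l (V b)"
| "tr e (LabA l (C j)) = FFq"
| "tr e (IncA i (V a) (V b)) = IncA i (V a) (V b)"
| "tr e (IncA i (V a) (C j)) = disj FFq (map (\<lambda>k. IncA i (V a) (C k))
      (filter (\<lambda>k. inc G e ! (k - 1) = srcs G ! (j - 1)) [1..<Suc (ne G arX e)]))"
| "tr e (IncA i (C j) t) = FFq"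
| "tr e (Neg \<phi>) = Neg (tr e \<phi>)"
| "tr e (Conj \<phi> \<psi>) = Conj (tr e \<phi>) (tr e \<psi>)"
| "tr e (Mem _ _) = FFq"
| "tr e (Cnt _ _ _) = FFq"
| "tr e (Sub _ _) = FFq"
| "tr e (Sng _) = FFq"
| "tr e (Ex1 _ _) = FFq"
| "tr e (Ex2 _ _) = FFq"

lemma tr_sat:
  assumes "qf_fo \<psi>" "e \<in> edges G" "\<forall>a\<in>fv1 \<psi>. \<rho> a \<in> univ (glue G arX A) \<and> \<not> isG (\<rho> a) \<and> eof (\<rho> a) = e"
  shows "sat (glue G arX A) \<rho> \<sigma> \<psi> \<longleftrightarrow> sat (A (lab G e)) (unembed \<circ> \<rho>) \<sigma>0 (tr e \<psi>)"
  using assms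
proof (induction e \<psi> rule: tr.induct)
  case (1 e a b) then show ?case by (auto simp: nonG_eq)
next
  case (2 e j k) then show ?case by (auto simp: glue_cnst)
next
  case (3 e a k) then show ?case by (auto simp: glue_cnst)
next
  case (4 e j b) then show ?case by (auto simp: glue_cnst)
next
  case (5 e l b) then show ?case by (auto simp: glue_lab_nonG)
next
  case (6 e l j) then show ?case by (auto simp: glue_cnst glue_lab_G)
next
  case (7 e i a b)
  then show ?case by (auto simp: glue_inc_nonG glue_univ_nonG)
next
  case (8 e i a j)
  then show ?case by (auto simp: glue_cnst glue_inc_nonG_gp disj_props)
next
  case (9 e i j t) then show ?case by (auto simp: glue_cnst glue_inc_G)
qed auto

lemma tr_wf:
  assumes "qf_fo \<psi>" "wf (voc S arS n) \<psi>"
  shows "qf_fo (tr e \<psi>) \<and> wf (voc S arS (ne G arX e)) (tr e \<psi>) \<and> fv1 (tr e \<psi>) \<subseteq> insert 0 (fv1 \<psi>)"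
  using assms
proof (induction e \<psi> rule: tr.induct)
  case (8 e i a j) then show ?case by (auto simp: disj_props voc_def)
qed (auto simp: voc_def)

definition nc :: "'eg \<Rightarrow> 'b fm" where
  "nc e = conjq (map (\<lambda>k. Neg (Eq (V 0) (C k))) [1..<Suc (ne G arX e)])"

lemma nc_props: "sat (A (lab G e)) \<rho> \<sigma> (nc e) \<longleftrightarrow> \<rho> 0 \<notin> Cs G arX A e"
  "qf_fo (nc e)" "fv1 (nc e) = {0}" "wf (voc S arS (ne G arX e)) (nc e)"
  by (auto simp: nc_def conjq_props Cs_def voc_def)

fun stm :: "'eg \<Rightarrow> 'b st \<Rightarrow> 'b st" where
  "stm e (SV j) = SV j"
| "stm e (SC \<psi>) = SC (Conj (tr e \<psi>) (nc e))"

lemma stm_props: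
  assumes "wfs (voc S arS n) Y"
  shows "wfs (voc S arS (ne G arX e)) (stm e Y)" "fv1s (stm e Y) = {}" "fv2s (stm e Y) = fv2s Y"
  using assms tr_wf[of _ n e] by (cases Y; auto simp: nc_props)+

lemma sset_pre:
  assumes "wfs Vc Y" "e \<in> edges G"
  shows "embed e -` sset (glue G arX A) \<rho> \<sigma> Y = sset (A (lab G e)) (unembed \<circ> \<rho>) (\<lambda>j. embed e -` \<sigma> j) (stm e Y)"
proof (cases Y)
  case (SV j) then show ?thesis by simp
next
  case (SC \<psi>)
  have q: "qf_fo \<psi>" "fv1 \<psi> \<subseteq> {0}" using assms SC by auto
  have "x \<in> embed e -` sset (glue G arX A) \<rho> \<sigma> Y \<longleftrightarrow>
        x \<in> sset (A (lab G e)) (unembed \<circ> \<rho>) (\<lambda>j. embed e -` \<sigma> j) (stm e Y)" for x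
  proof -
    have u: "unembed \<circ> \<rho>(0 := embed e x) = (unembed \<circ> \<rho>)(0 := x)" by auto
    have "embed e x \<in> univ (glue G arX A) \<Longrightarrow>
      sat (glue G arX A) (\<rho>(0 := embed e x)) \<sigma> \<psi> \<longleftrightarrow> sat (A (lab G e)) (unembed \<circ> \<rho>(0 := embed e x)) (\<lambda>j. embed e -` \<sigma> j) (tr e \<psi>)"
      using q assms(2) by (intro tr_sat) auto
    then show ?thesis using SC u assms(2) by (auto simp: glue_univ_embed nc_props)
  qed
  then show ?thesis by blast
qed

lemma decomp:
  assumes "T \<subseteq> univ (glue G arX A)"
  shows "T = {u\<in>T. isG u} \<union> (\<Union>e\<in>edges G. embed e ` (embed e -` T))"
proof (intro equalityI subsetI)
  fix u assume u: "u \<in> T"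
  show "u \<in> {u\<in>T. isG u} \<union> (\<Union>e\<in>edges G. embed e ` (embed e -` T))"
  proof (cases "isG u")
    case False
    then have "eof u \<in> edges G" using assms u glue_univ_nonG by blast
    then show ?thesis using False u nonG_embed[OF False] by (metis (no_types, lifting) UN_iff UnI2 image_iff vimageI)
  qed (use u in auto)
qed auto

lemma card_decomp:
  fixes T :: "(('vg + 'eg \<times> 'v) + ('eg \<times> 'e)) set"
  assumes "T \<subseteq> univ (glue G arX A)" "finite T" "finite (edges G)"
  shows "card T = card {u\<in>T. isG u} + (\<Sum>e\<in>edges G. card (embed e -` T))"
proof -
  have fin: "finite (embed e -` T)" for e using assms(2) by (rule finite_vimageI) (auto simp: inj_on_def)
  have c: "card ((\<Union>e\<in>edges G. embed e ` (embed e -` T)) :: (('vg + 'eg \<times> 'v) + ('eg \<times> 'e)) set) = (\<Sum>e\<in>edges G. card (embed e -` T))"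
    apply (subst card_UN_disjoint)
    using fin assms(2,3) apply auto[3]
    apply (intro sum.cong refl card_image)
    apply (auto simp: inj_on_def)
    done
  have "card T = card ({u\<in>T. isG u} \<union> (\<Union>e\<in>edges G. embed e ` (embed e -` T)))"
    using decomp[OF assms(1)] by simp
  also have "\<dots> = card {u\<in>T. isG u} + card ((\<Union>e\<in>edges G. embed e ` (embed e -` T)) :: (('vg + 'eg \<times> 'v) + ('eg \<times> 'e)) set)"
    using assms fin by (intro card_Un_disjoint) auto
  finally show ?thesis using c by simp
qed

end

lemma card_ge2: "finite X \<Longrightarrow> X \<noteq> {} \<Longrightarrow> \<not> (\<exists>u. X = {u}) \<Longrightarrow> card X \<ge> 2"
proof -
  assume h: "finite X" "X \<noteq> {}" "\<not> (\<exists>u. X = {u})"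
  have "card X \<noteq> 0" using h by simp
  moreover have "card X \<noteq> Suc 0" using h(3) card_1_singleton_iff by blast
  ultimately show ?thesis by linarith
qed

lemma min2_eq:
  assumes "finite X" "finite Y" "X = {} \<longleftrightarrow> Y = {}" "(\<exists>u. X = {u}) \<longleftrightarrow> (\<exists>u. Y = {u})"
  shows "min (card X) 2 = min (card Y) (2::nat)"
proof (cases "X = {}")
  case True then show ?thesis using assms(3) by simp
next
  case F1: False
  show ?thesis
  proof (cases "\<exists>u. X = {u}")
    case True
    then obtain u v where "X = {u}" "Y = {v}" using assms(4) by blast
    then show ?thesis by simp
  next
    case False
    then have "card X \<ge> 2" "card Y \<ge> 2" using card_ge2 assms F1 by metis+
    then show ?thesis by simp
  qed
qed

lemma sum_one:
  assumes "finite E" "\<forall>e\<in>E. min (f e) 2 = min (g e) (2::nat)"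
  shows "(c + sum f E = 1) \<longleftrightarrow> (c + sum g E = 1)"
proof (cases "\<exists>e\<in>E. f e \<ge> 2")
  case True
  then obtain e where e: "e \<in> E" "f e \<ge> 2" by blast
  have m: "min (f e) 2 = min (g e) 2" using assms(2) e(1) by blast
  have "g e \<ge> 2" using m e(2) by (auto simp: min_def split: if_splits)
  moreover have "f e \<le> sum f E" "g e \<le> sum g E" using e assms(1) by (auto intro: member_le_sum)
  ultimately show ?thesis using e by auto
next
  case False
  have "f e = g e" if "e \<in> E" for e
  proof -
    have m: "min (f e) 2 = min (g e) 2" using assms(2) that by blast
    have "f e < 2" using False that by auto
    then show ?thesis using m by (auto simp: min_def split: if_splits)
  qed
  then have "sum f E = sum g E" by (intro sum.cong) auto
  then show ?thesis by simp
qed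

context
  fixes G :: "('vg, 'eg, 'x) hg" and arX :: "'x \<Rightarrow> nat"
    and S :: "'a set" and arS :: "'a \<Rightarrow> nat" and M :: "nat set"
begin

lemma qf_G:
  assumes "qf_fo \<psi>" "\<forall>a\<in>fv1 \<psi>. isG (\<rho> a) \<and> \<rho> a = \<rho>' a"
  shows "sat (glue G arX A) \<rho> \<sigma> \<psi> \<longleftrightarrow> sat (glue G arX B) \<rho>' \<sigma>' \<psi>"
  using assms
proof (induction \<psi>)
  case (Eq s t) then show ?case by (cases s; cases t; auto simp: glue_cnst)
next
  case (LabA a t) then show ?case by (cases t; auto simp: glue_cnst glue_lab_G)
next
  case (IncA i s t) then show ?case by (cases s; auto simp: glue_cnst glue_inc_G)
next
  case (Neg \<psi>)
  then have "sat (glue G arX A) \<rho> \<sigma> \<psi> \<longleftrightarrow> sat (glue G arX B) \<rho>' \<sigma>' \<psi>" by (intro Neg.IH) auto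
  then show ?case by simp
next
  case (Conj \<psi>1 \<psi>2)
  then have "sat (glue G arX A) \<rho> \<sigma> \<psi>1 \<longleftrightarrow> sat (glue G arX B) \<rho>' \<sigma>' \<psi>1"
     "sat (glue G arX A) \<rho> \<sigma> \<psi>2 \<longleftrightarrow> sat (glue G arX B) \<rho>' \<sigma>' \<psi>2" by (intro Conj.IH; auto)+
  then show ?case by simp
qed auto

lemma sset_sub:
  assumes I: "Inv G arX S arS M A B r D D2 \<rho> \<sigma> \<rho>' \<sigma>'" and "fv2s Y \<subseteq> D2"
  shows "sset (glue G arX A) \<rho> \<sigma> Y \<subseteq> univ (glue G arX A)"
  using InvD(5)[OF I] assms(2) by (cases Y) auto

lemma sset_G:
  assumes I: "Inv G arX S arS M A B r D D2 \<rho> \<sigma> \<rho>' \<sigma>'" and "fv2s Y \<subseteq> D2" "wfs Vc Y"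
  shows "{u\<in>sset (glue G arX A) \<rho> \<sigma> Y. isG u} = {u\<in>sset (glue G arX B) \<rho>' \<sigma>' Y. isG u}"
proof (cases Y)
  case (SV j) then show ?thesis using InvD(5)[OF I] assms(2) by auto
next
  case (SC \<psi>)
  have q: "qf_fo \<psi>" "fv1 \<psi> \<subseteq> {0}" using assms SC by auto
  have "isG u \<Longrightarrow> sat (glue G arX A) (\<rho>(0:=u)) \<sigma> \<psi> \<longleftrightarrow> sat (glue G arX B) (\<rho>'(0:=u)) \<sigma>' \<psi>" for u
    using q by (intro qf_G) auto
  then show ?thesis using SC by (auto simp: glue_univ_G)
qed

lemma sub_decomp:
  assumes "T1 \<subseteq> univ (glue G arX A)"
  shows "T1 \<subseteq> T2 \<longleftrightarrow> {u\<in>T1. isG u} \<subseteq> {u\<in>T2. isG u} \<and> (\<forall>e\<in>edges G. embed e -` T1 \<subseteq> embed e -` T2)"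
proof
  assume h: "{u\<in>T1. isG u} \<subseteq> {u\<in>T2. isG u} \<and> (\<forall>e\<in>edges G. embed e -` T1 \<subseteq> embed e -` T2)"
  have "T1 = {u\<in>T1. isG u} \<union> (\<Union>e\<in>edges G. embed e ` (embed e -` T1))" by (rule decomp[OF assms])
  also have "\<dots> \<subseteq> T2" using h by auto
  finally show "T1 \<subseteq> T2" .
qed auto

lemma sset_pre':
  assumes "wfs Vc Y" "e \<in> edges G"
  shows "embed e -` sset (glue G arX A) \<rho> \<sigma> Y = sset (A (lab G e)) (unembed \<circ> \<rho>) (\<lambda>j. embed e -` \<sigma> j) (stm G arX e Y)"
  by (rule sset_pre[OF assms])

lemma mem_pre: "\<not> isG u \<Longrightarrow> eof u = e \<Longrightarrow> (u \<in> T \<longleftrightarrow> unembed u \<in> embed e -` T)"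
  by (metis nonG_embed vimage_eq)

lemma atom_Mem:
  assumes I: "Inv G arX S arS M A B r D D2 \<rho> \<sigma> \<rho>' \<sigma>'" and t: "tvars t \<subseteq> D"
    and Y: "wfs (voc S arS n) Y" "fv2s Y \<subseteq> D2"
  shows "sat (glue G arX A) \<rho> \<sigma> (Mem t Y) \<longleftrightarrow> sat (glue G arX B) \<rho>' \<sigma>' (Mem t Y)"
proof -
  note Lt = term_loc[OF I t]
  have GY: "{u\<in>sset (glue G arX A) \<rho> \<sigma> Y. isG u} = {u\<in>sset (glue G arX B) \<rho>' \<sigma>' Y. isG u}"
    by (rule sset_G[OF I Y(2) Y(1)])
  show ?thesis
  proof (cases "isG (tm (glue G arX A) \<rho> t)")
    case True
    then have v: "tm (glue G arX B) \<rho>' t = tm (glue G arX A) \<rho> t" using Lt by auto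
    have "tm (glue G arX A) \<rho> t \<in> sset (glue G arX A) \<rho> \<sigma> Y \<longleftrightarrow> tm (glue G arX A) \<rho> t \<in> {u\<in>sset (glue G arX A) \<rho> \<sigma> Y. isG u}"
      using True by simp
    also have "\<dots> \<longleftrightarrow> tm (glue G arX B) \<rho>' t \<in> sset (glue G arX B) \<rho>' \<sigma>' Y"
      unfolding GY using True v by simp
    finally show ?thesis by simp
  next
    case tN: False
    obtain i where i: "t = V i" "i \<in> Dof \<rho> D (eof (\<rho> i))" "eof (\<rho>' i) = eof (\<rho> i)" "eof (\<rho> i) \<in> edges G"
      using Lt(3)[OF tN] by blast
    define e where "e = eof (\<rho> i)"
    have nG: "\<not> isG (\<rho> i)" "\<not> isG (\<rho>' i)" using tN Lt(1) i by auto
    have ri: "\<rho> i = embed e (unembed (\<rho> i))" "\<rho>' i = embed e (unembed (\<rho>' i))"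
      using nonG_embed[OF nG(1)] nonG_embed[OF nG(2)] i unfolding e_def by auto
    have ie: "i \<in> Dof \<rho> D e" "e \<in> edges G" using i e_def by auto
    note sp = stm_props[OF Y(1)]
    have "sat (A (lab G e)) (unembed \<circ> \<rho>) (\<lambda>j. embed e -` \<sigma> j) (Mem (V i) (stm G arX e Y)) \<longleftrightarrow>
          sat (B (lab G e)) (unembed \<circ> \<rho>') (\<lambda>j. embed e -` \<sigma>' j) (Mem (V i) (stm G arX e Y))"
      using ie Y(2) by (intro comp_eq[OF I]) (auto simp: sp)
    moreover have "sat (A (lab G e)) (unembed \<circ> \<rho>) (\<lambda>j. embed e -` \<sigma> j) (Mem (V i) (stm G arX e Y)) \<longleftrightarrow> \<rho> i \<in> sset (glue G arX A) \<rho> \<sigma> Y"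
      using sset_pre'[OF Y(1) ie(2), where A=A and \<rho>=\<rho> and \<sigma>=\<sigma>] by (simp add: mem_pre[OF nG(1) e_def[symmetric]])
    moreover have "sat (B (lab G e)) (unembed \<circ> \<rho>') (\<lambda>j. embed e -` \<sigma>' j) (Mem (V i) (stm G arX e Y)) \<longleftrightarrow> \<rho>' i \<in> sset (glue G arX B) \<rho>' \<sigma>' Y"
      using sset_pre'[OF Y(1) ie(2), where A=B and \<rho>=\<rho>' and \<sigma>=\<sigma>'] by (simp add: mem_pre[OF nG(2)] i(3) e_def)
    ultimately show ?thesis using i by simp
  qed
qed

lemma atom_Sub:
  assumes I: "Inv G arX S arS M A B r D D2 \<rho> \<sigma> \<rho>' \<sigma>'"
    and Y: "wfs (voc S arS n) Y" "fv2s Y \<subseteq> D2" and Z: "wfs (voc S arS n) Z" "fv2s Z \<subseteq> D2"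
  shows "sat (glue G arX A) \<rho> \<sigma> (Sub Y Z) \<longleftrightarrow> sat (glue G arX B) \<rho>' \<sigma>' (Sub Y Z)"
proof -
  have GY: "{u\<in>sset (glue G arX A) \<rho> \<sigma> Y. isG u} = {u\<in>sset (glue G arX B) \<rho>' \<sigma>' Y. isG u}"
    by (rule sset_G[OF I Y(2) Y(1)])
  have GZ: "{u\<in>sset (glue G arX A) \<rho> \<sigma> Z. isG u} = {u\<in>sset (glue G arX B) \<rho>' \<sigma>' Z. isG u}"
    by (rule sset_G[OF I Z(2) Z(1)])
  have c: "embed e -` sset (glue G arX A) \<rho> \<sigma> Y \<subseteq> embed e -` sset (glue G arX A) \<rho> \<sigma> Z \<longleftrightarrow>
           embed e -` sset (glue G arX B) \<rho>' \<sigma>' Y \<subseteq> embed e -` sset (glue G arX B) \<rho>' \<sigma>' Z" if e: "e \<in> edges G" for e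
  proof -
    have "sat (A (lab G e)) (unembed \<circ> \<rho>) (\<lambda>j. embed e -` \<sigma> j) (Sub (stm G arX e Y) (stm G arX e Z)) \<longleftrightarrow>
          sat (B (lab G e)) (unembed \<circ> \<rho>') (\<lambda>j. embed e -` \<sigma>' j) (Sub (stm G arX e Y) (stm G arX e Z))"
      using e Y(2) Z(2) by (intro comp_eq[OF I]) (auto simp: stm_props[OF Y(1)] stm_props[OF Z(1)])
    then show ?thesis by (simp only: sset_pre'[OF Y(1) e] sset_pre'[OF Z(1) e]) simp
  qed
  have "sat (glue G arX A) \<rho> \<sigma> (Sub Y Z) \<longleftrightarrow>
     {u\<in>sset (glue G arX A) \<rho> \<sigma> Y. isG u} \<subseteq> {u\<in>sset (glue G arX A) \<rho> \<sigma> Z. isG u} \<and>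
     (\<forall>e\<in>edges G. embed e -` sset (glue G arX A) \<rho> \<sigma> Y \<subseteq> embed e -` sset (glue G arX A) \<rho> \<sigma> Z)"
    using sub_decomp[OF sset_sub[OF I Y(2)]] by simp
  also have "\<dots> \<longleftrightarrow>
     {u\<in>sset (glue G arX B) \<rho>' \<sigma>' Y. isG u} \<subseteq> {u\<in>sset (glue G arX B) \<rho>' \<sigma>' Z. isG u} \<and>
     (\<forall>e\<in>edges G. embed e -` sset (glue G arX B) \<rho>' \<sigma>' Y \<subseteq> embed e -` sset (glue G arX B) \<rho>' \<sigma>' Z)"
    unfolding GY GZ using c by blast
  also have "\<dots> \<longleftrightarrow> sat (glue G arX B) \<rho>' \<sigma>' (Sub Y Z)"
    using sub_decomp[OF sset_sub[OF Inv_sym[OF I] Y(2)]] by simp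
  finally show ?thesis .
qed

lemma comp_cards:
  assumes I: "Inv G arX S arS M A B r D D2 \<rho> \<sigma> \<rho>' \<sigma>'"
    and Y: "wfs (voc S arS n) Y" "fv2s Y \<subseteq> D2"
    and fin: "finite (univ (glue G arX A))" "finite (univ (glue G arX B))" "finite (edges G)"
  shows "finite (sset (glue G arX A) \<rho> \<sigma> Y)" "finite (sset (glue G arX B) \<rho>' \<sigma>' Y)"
    "card (sset (glue G arX A) \<rho> \<sigma> Y) = card {u\<in>sset (glue G arX A) \<rho> \<sigma> Y. isG u} + (\<Sum>e\<in>edges G. card (embed e -` sset (glue G arX A) \<rho> \<sigma> Y))"
    "card (sset (glue G arX B) \<rho>' \<sigma>' Y) = card {u\<in>sset (glue G arX A) \<rho> \<sigma> Y. isG u} + (\<Sum>e\<in>edges G. card (embed e -` sset (glue G arX B) \<rho>' \<sigma>' Y))"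
    "\<And>e. finite (embed e -` sset (glue G arX A) \<rho> \<sigma> Y)" "\<And>e. finite (embed e -` sset (glue G arX B) \<rho>' \<sigma>' Y)"
proof -
  have s1: "sset (glue G arX A) \<rho> \<sigma> Y \<subseteq> univ (glue G arX A)" by (rule sset_sub[OF I Y(2)])
  have s2: "sset (glue G arX B) \<rho>' \<sigma>' Y \<subseteq> univ (glue G arX B)" by (rule sset_sub[OF Inv_sym[OF I] Y(2)])
  show f1: "finite (sset (glue G arX A) \<rho> \<sigma> Y)" using s1 fin(1) by (rule finite_subset)
  show f2: "finite (sset (glue G arX B) \<rho>' \<sigma>' Y)" using s2 fin(2) by (rule finite_subset)
  show "card (sset (glue G arX A) \<rho> \<sigma> Y) = card {u\<in>sset (glue G arX A) \<rho> \<sigma> Y. isG u} + (\<Sum>e\<in>edges G. card (embed e -` sset (glue G arX A) \<rho> \<sigma> Y))"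
    by (rule card_decomp[OF s1 f1 fin(3)])
  show "card (sset (glue G arX B) \<rho>' \<sigma>' Y) = card {u\<in>sset (glue G arX A) \<rho> \<sigma> Y. isG u} + (\<Sum>e\<in>edges G. card (embed e -` sset (glue G arX B) \<rho>' \<sigma>' Y))"
    unfolding sset_G[OF I Y(2) Y(1)] by (rule card_decomp[OF s2 f2 fin(3)])
  show "\<And>e. finite (embed e -` sset (glue G arX A) \<rho> \<sigma> Y)" using f1 by (rule finite_vimageI) (auto simp: inj_on_def)
  show "\<And>e. finite (embed e -` sset (glue G arX B) \<rho>' \<sigma>' Y)" using f2 by (rule finite_vimageI) (auto simp: inj_on_def)
qed

lemma atom_Sng:
  assumes I: "Inv G arX S arS M A B r D D2 \<rho> \<sigma> \<rho>' \<sigma>'"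
    and Y: "wfs (voc S arS n) Y" "fv2s Y \<subseteq> D2"
    and fin: "finite (univ (glue G arX A))" "finite (univ (glue G arX B))" "finite (edges G)"
  shows "sat (glue G arX A) \<rho> \<sigma> (Sng Y) \<longleftrightarrow> sat (glue G arX B) \<rho>' \<sigma>' (Sng Y)"
proof -
  note cc = comp_cards[OF I Y fin]
  have m: "min (card (embed e -` sset (glue G arX A) \<rho> \<sigma> Y)) 2 = min (card (embed e -` sset (glue G arX B) \<rho>' \<sigma>' Y)) 2"
    if e: "e \<in> edges G" for e
  proof (rule min2_eq[OF cc(5) cc(6)])
    have "sat (A (lab G e)) (unembed \<circ> \<rho>) (\<lambda>j. embed e -` \<sigma> j) (Sub (stm G arX e Y) (SC FFq)) \<longleftrightarrow>
          sat (B (lab G e)) (unembed \<circ> \<rho>') (\<lambda>j. embed e -` \<sigma>' j) (Sub (stm G arX e Y) (SC FFq))"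
      using e Y(2) by (intro comp_eq[OF I]) (auto simp: stm_props[OF Y(1)])
    then show "embed e -` sset (glue G arX A) \<rho> \<sigma> Y = {} \<longleftrightarrow> embed e -` sset (glue G arX B) \<rho>' \<sigma>' Y = {}"
      using sset_pre'[OF Y(1) e, where A=A and \<rho>=\<rho> and \<sigma>=\<sigma>] sset_pre'[OF Y(1) e, where A=B and \<rho>=\<rho>' and \<sigma>=\<sigma>'] by simp
    have "sat (A (lab G e)) (unembed \<circ> \<rho>) (\<lambda>j. embed e -` \<sigma> j) (Sng (stm G arX e Y)) \<longleftrightarrow>
          sat (B (lab G e)) (unembed \<circ> \<rho>') (\<lambda>j. embed e -` \<sigma>' j) (Sng (stm G arX e Y))"
      using e Y(2) by (intro comp_eq[OF I]) (auto simp: stm_props[OF Y(1)])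
    then show "(\<exists>u. embed e -` sset (glue G arX A) \<rho> \<sigma> Y = {u}) \<longleftrightarrow> (\<exists>u. embed e -` sset (glue G arX B) \<rho>' \<sigma>' Y = {u})"
      using sset_pre'[OF Y(1) e, where A=A and \<rho>=\<rho> and \<sigma>=\<sigma>] sset_pre'[OF Y(1) e, where A=B and \<rho>=\<rho>' and \<sigma>=\<sigma>'] by simp
  qed
  have "sat (glue G arX A) \<rho> \<sigma> (Sng Y) \<longleftrightarrow> card (sset (glue G arX A) \<rho> \<sigma> Y) = 1"
    by (simp add: card_1_singleton_iff)
  also have "\<dots> \<longleftrightarrow> card (sset (glue G arX B) \<rho>' \<sigma>' Y) = 1"
    unfolding cc(3) cc(4) using m fin(3) by (intro sum_one) auto
  also have "\<dots> \<longleftrightarrow> sat (glue G arX B) \<rho>' \<sigma>' (Sng Y)"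
    by (simp add: card_1_singleton_iff)
  finally show ?thesis .
qed

lemma atom_Cnt:
  assumes I: "Inv G arX S arS M A B r D D2 \<rho> \<sigma> \<rho>' \<sigma>'"
    and Y: "wfs (voc S arS n) Y" "fv2s Y \<subseteq> D2" and m: "m \<in> M" "0 < m"
    and fin: "finite (univ (glue G arX A))" "finite (univ (glue G arX B))" "finite (edges G)"
  shows "sat (glue G arX A) \<rho> \<sigma> (Cnt Y k m) \<longleftrightarrow> sat (glue G arX B) \<rho>' \<sigma>' (Cnt Y k m)"
proof -
  note cc = comp_cards[OF I Y fin]
  define f where "f e = card (embed e -` sset (glue G arX A) \<rho> \<sigma> Y)" for e
  define g where "g e = card (embed e -` sset (glue G arX B) \<rho>' \<sigma>' Y)" for e
  have fg: "f e mod m = g e mod m" if e: "e \<in> edges G" for e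
  proof -
    have "sat (A (lab G e)) (unembed \<circ> \<rho>) (\<lambda>j. embed e -` \<sigma> j) (Cnt (stm G arX e Y) (f e) m) \<longleftrightarrow>
          sat (B (lab G e)) (unembed \<circ> \<rho>') (\<lambda>j. embed e -` \<sigma>' j) (Cnt (stm G arX e Y) (f e) m)"
      using e Y(2) m by (intro comp_eq[OF I]) (auto simp: stm_props[OF Y(1)])
    moreover have "sat (A (lab G e)) (unembed \<circ> \<rho>) (\<lambda>j. embed e -` \<sigma> j) (Cnt (stm G arX e Y) (f e) m)"
      unfolding sat.simps sset_pre'[OF Y(1) e, symmetric] f_def using cc(5) by blast
    ultimately have "sat (B (lab G e)) (unembed \<circ> \<rho>') (\<lambda>j. embed e -` \<sigma>' j) (Cnt (stm G arX e Y) (f e) m)"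
      by blast
    then show ?thesis unfolding sat.simps sset_pre'[OF Y(1) e, symmetric] g_def by simp
  qed
  have "sum f (edges G) mod m = sum g (edges G) mod m"
  proof -
    have "sum f (edges G) mod m = (\<Sum>e\<in>edges G. f e mod m) mod m" by (rule mod_sum_eq[symmetric])
    also have "\<dots> = (\<Sum>e\<in>edges G. g e mod m) mod m" using fg by (simp cong: sum.cong)
    also have "\<dots> = sum g (edges G) mod m" by (rule mod_sum_eq)
    finally show ?thesis .
  qed
  then have "card (sset (glue G arX A) \<rho> \<sigma> Y) mod m = card (sset (glue G arX B) \<rho>' \<sigma>' Y) mod m"
    unfolding cc(3) cc(4) f_def[symmetric] g_def[symmetric]
    using mod_add_right_eq[of "card {u\<in>sset (glue G arX A) \<rho> \<sigma> Y. isG u}" "sum f (edges G)" m]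
      mod_add_right_eq[of "card {u\<in>sset (glue G arX A) \<rho> \<sigma> Y. isG u}" "sum g (edges G)" m] by simp
  then show ?thesis using cc(1,2) by simp
qed

end

context
  fixes G :: "('vg, 'eg, 'x) hg" and arX :: "'x \<Rightarrow> nat"
    and S :: "'a set" and arS :: "'a \<Rightarrow> nat" and M :: "nat set"
begin

lemma Inv_ext1:
  fixes A B :: "'x \<Rightarrow> ('v + 'e, 'a) model" and u :: "('vg + 'eg \<times> 'v) + ('eg \<times> 'e)"
  assumes I: "Inv G arX S arS M A B (Suc r) D D2 \<rho> \<sigma> \<rho>' \<sigma>'" and u: "u \<in> univ (glue G arX A)"
    and fin: "\<forall>e\<in>edges G. finite (univ (B (lab G e)))"
  shows "\<exists>w\<in>univ (glue G arX B). Inv G arX S arS M A B r (insert i D) D2 (\<rho>(i:=u)) \<sigma> (\<rho>'(i:=w)) \<sigma>'"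
proof -
  note h = InvD[OF I]
  have other: "Eqv (cvoc G arX S arS e) r M (Dof (\<rho>(i:=u)) (insert i D) e) D2 (A (lab G e)) (unembed \<circ> \<rho>(i:=u)) (\<lambda>j. embed e -` \<sigma> j)
        (B (lab G e)) (unembed \<circ> \<rho>'(i:=w)) (\<lambda>j. embed e -` \<sigma>' j)"
    if e: "e \<in> edges G" and ne: "isG u \<or> eof u \<noteq> e" for e w
  proof (rule Eqv_weaken[OF h(6)[rule_format, OF e]])
    show "Dof (\<rho>(i:=u)) (insert i D) e \<subseteq> Dof \<rho> D e" using ne unfolding Dof_def by auto
    show "\<forall>a\<in>Dof (\<rho>(i:=u)) (insert i D) e. (unembed \<circ> \<rho>(i:=u)) a = (unembed \<circ> \<rho>) a"
      using ne unfolding Dof_def by auto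
    show "\<forall>a\<in>Dof (\<rho>(i:=u)) (insert i D) e. (unembed \<circ> \<rho>'(i:=w)) a = (unembed \<circ> \<rho>') a"
      using ne unfolding Dof_def by auto
  qed simp
  show ?thesis
  proof (cases "isG u")
    case True
    have w: "u \<in> univ (glue G arX B)" using u True glue_univ_G by blast
    have "Inv G arX S arS M A B r (insert i D) D2 (\<rho>(i:=u)) \<sigma> (\<rho>'(i:=u)) \<sigma>'"
    proof (rule InvI)
      show "\<forall>e\<in>edges G. Eqv (cvoc G arX S arS e) r M (Dof (\<rho>(i:=u)) (insert i D) e) D2 (A (lab G e)) (unembed \<circ> \<rho>(i:=u)) (\<lambda>j. embed e -` \<sigma> j)
        (B (lab G e)) (unembed \<circ> \<rho>'(i:=u)) (\<lambda>j. embed e -` \<sigma>' j)" using other True by blast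
    qed (use h u w True in auto)
    then show ?thesis using w by blast
  next
    case False
    define e0 where "e0 = eof u"
    define x where "x = unembed u"
    have ux: "u = embed e0 x" using nonG_embed[OF False] unfolding e0_def x_def by simp
    have e0: "e0 \<in> edges G" "x \<in> univ (A (lab G e0))" "x \<notin> Cs G arX A e0"
      using u unfolding ux by (auto simp: glue_univ_embed)
    obtain y where y: "y \<in> univ (B (lab G e0))"
      "Eqv (cvoc G arX S arS e0) r M (insert i (Dof \<rho> D e0)) D2 (A (lab G e0)) ((unembed \<circ> \<rho>)(i:=x)) (\<lambda>j. embed e0 -` \<sigma> j)
        (B (lab G e0)) ((unembed \<circ> \<rho>')(i:=y)) (\<lambda>j. embed e0 -` \<sigma>' j)"
      using ext_elem[OF h(6)[rule_format, OF e0(1)] fin[rule_format, OF e0(1)] e0(2)] by blast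
    have yC: "y \<notin> Cs G arX B e0"
    proof
      assume "y \<in> Cs G arX B e0"
      then obtain k where k: "k \<in> {1..ne G arX e0}" "y = cnst (B (lab G e0)) k" unfolding Cs_def by auto
      have "sat (A (lab G e0)) ((unembed \<circ> \<rho>)(i:=x)) (\<lambda>j. embed e0 -` \<sigma> j) (Eq (V i) (C k)) \<longleftrightarrow>
            sat (B (lab G e0)) ((unembed \<circ> \<rho>')(i:=y)) (\<lambda>j. embed e0 -` \<sigma>' j) (Eq (V i) (C k))"
        using k(1) by (intro EqvD[OF y(2)]) (auto simp: voc_def)
      then have "x = cnst (A (lab G e0)) k" using k by simp
      then show False using e0(3) k(1) unfolding Cs_def by auto
    qed
    define w :: "('vg + 'eg \<times> 'v) + ('eg \<times> 'e)" where "w = embed e0 y"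
    have w: "w \<in> univ (glue G arX B)" unfolding w_def using e0(1) y(1) yC by (simp add: glue_univ_embed)
    have "Inv G arX S arS M A B r (insert i D) D2 (\<rho>(i:=u)) \<sigma> (\<rho>'(i:=w)) \<sigma>'"
    proof (rule InvI)
      show "\<forall>e\<in>edges G. Eqv (cvoc G arX S arS e) r M (Dof (\<rho>(i:=u)) (insert i D) e) D2 (A (lab G e)) (unembed \<circ> \<rho>(i:=u)) (\<lambda>j. embed e -` \<sigma> j)
        (B (lab G e)) (unembed \<circ> \<rho>'(i:=w)) (\<lambda>j. embed e -` \<sigma>' j)"
      proof
        fix e assume e: "e \<in> edges G"
        show "Eqv (cvoc G arX S arS e) r M (Dof (\<rho>(i:=u)) (insert i D) e) D2 (A (lab G e)) (unembed \<circ> \<rho>(i:=u)) (\<lambda>j. embed e -` \<sigma> j)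
          (B (lab G e)) (unembed \<circ> \<rho>'(i:=w)) (\<lambda>j. embed e -` \<sigma>' j)"
        proof (cases "e = e0")
          case True
          show ?thesis unfolding True
          proof (rule Eqv_weaken[OF y(2)])
            show "Dof (\<rho>(i:=u)) (insert i D) e0 \<subseteq> insert i (Dof \<rho> D e0)" unfolding Dof_def by auto
            show "\<forall>a\<in>Dof (\<rho>(i:=u)) (insert i D) e0. (unembed \<circ> \<rho>(i:=u)) a = ((unembed \<circ> \<rho>)(i:=x)) a"
              using x_def by auto
            show "\<forall>a\<in>Dof (\<rho>(i:=u)) (insert i D) e0. (unembed \<circ> \<rho>'(i:=w)) a = ((unembed \<circ> \<rho>')(i:=y)) a"
              using w_def by auto
          qed simp
        next
          case False
          then show ?thesis using other[OF e] e0_def by auto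
        qed
      qed
    qed (use h u w False ux w_def in auto)
    then show ?thesis using w by blast
  qed
qed

lemma Inv_ext2:
  fixes A B :: "'x \<Rightarrow> ('v + 'e, 'a) model" and U :: "(('vg + 'eg \<times> 'v) + ('eg \<times> 'e)) set"
  assumes I: "Inv G arX S arS M A B (Suc r) D D2 \<rho> \<sigma> \<rho>' \<sigma>'" and U: "U \<subseteq> univ (glue G arX A)"
    and fin: "\<forall>e\<in>edges G. finite (univ (B (lab G e)))"
  shows "\<exists>W\<subseteq>univ (glue G arX B). Inv G arX S arS M A B r D (insert j D2) \<rho> (\<sigma>(j:=U)) \<rho>' (\<sigma>'(j:=W))"
proof -
  note h = InvD[OF I]
  have Ue: "embed e -` U \<subseteq> univ (A (lab G e)) - Cs G arX A e" for e
    using U by (auto simp: glue_univ_embed)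
  have "\<forall>e\<in>edges G. \<exists>We. We \<subseteq> univ (B (lab G e)) \<and>
     Eqv (cvoc G arX S arS e) r M (Dof \<rho> D e) (insert j D2) (A (lab G e)) (unembed \<circ> \<rho>) ((\<lambda>j. embed e -` \<sigma> j)(j := embed e -` U))
        (B (lab G e)) (unembed \<circ> \<rho>') ((\<lambda>j. embed e -` \<sigma>' j)(j := We))"
  proof
    fix e assume e: "e \<in> edges G"
    show "\<exists>We. We \<subseteq> univ (B (lab G e)) \<and>
     Eqv (cvoc G arX S arS e) r M (Dof \<rho> D e) (insert j D2) (A (lab G e)) (unembed \<circ> \<rho>) ((\<lambda>j. embed e -` \<sigma> j)(j := embed e -` U))
        (B (lab G e)) (unembed \<circ> \<rho>') ((\<lambda>j. embed e -` \<sigma>' j)(j := We))"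
      using ext_set[OF h(6)[rule_format, OF e] fin[rule_format, OF e], of "embed e -` U" j] Ue[of e] by blast
  qed
  then obtain Wf where Wf: "\<forall>e\<in>edges G. Wf e \<subseteq> univ (B (lab G e)) \<and>
     Eqv (cvoc G arX S arS e) r M (Dof \<rho> D e) (insert j D2) (A (lab G e)) (unembed \<circ> \<rho>) ((\<lambda>j. embed e -` \<sigma> j)(j := embed e -` U))
        (B (lab G e)) (unembed \<circ> \<rho>') ((\<lambda>j. embed e -` \<sigma>' j)(j := Wf e))"
    by metis
  have WfC: "Wf e \<inter> Cs G arX B e = {}" if e: "e \<in> edges G" for e
  proof (rule ccontr)
    assume "Wf e \<inter> Cs G arX B e \<noteq> {}"
    then obtain k where k: "k \<in> {1..ne G arX e}" "cnst (B (lab G e)) k \<in> Wf e" unfolding Cs_def by blast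
    have "sat (A (lab G e)) (unembed \<circ> \<rho>) ((\<lambda>j. embed e -` \<sigma> j)(j := embed e -` U)) (Mem (C k) (SV j)) \<longleftrightarrow>
          sat (B (lab G e)) (unembed \<circ> \<rho>') ((\<lambda>j. embed e -` \<sigma>' j)(j := Wf e)) (Mem (C k) (SV j))"
      using k(1) by (intro EqvD[OF Wf[rule_format, OF e, THEN conjunct2]]) (auto simp: voc_def)
    then have "cnst (A (lab G e)) k \<in> embed e -` U" using k by simp
    then show False using Ue[of e] k(1) unfolding Cs_def by auto
  qed
  define W :: "(('vg + 'eg \<times> 'v) + ('eg \<times> 'e)) set" where "W = {u\<in>U. isG u} \<union> (\<Union>e\<in>edges G. embed e ` Wf e)"
  have Wsub: "W \<subseteq> univ (glue G arX B)"
  proof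
    fix w assume "w \<in> W"
    then consider "w \<in> U" "isG w" | e y where "e \<in> edges G" "y \<in> Wf e" "w = embed e y" unfolding W_def by auto
    then show "w \<in> univ (glue G arX B)"
    proof cases
      case 1 then show ?thesis using U glue_univ_G by blast
    next
      case 2 then show ?thesis using Wf WfC by (auto simp: glue_univ_embed)
    qed
  qed
  have WG: "{u\<in>W. isG u} = {u\<in>U. isG u}" unfolding W_def by auto
  have Wpre: "embed e -` W = Wf e" if "e \<in> edges G" for e
    unfolding W_def using that by auto
  have "Inv G arX S arS M A B r D (insert j D2) \<rho> (\<sigma>(j:=U)) \<rho>' (\<sigma>'(j:=W))"
  proof (rule InvI)
    show "\<forall>e\<in>edges G. Eqv (cvoc G arX S arS e) r M (Dof \<rho> D e) (insert j D2) (A (lab G e)) (unembed \<circ> \<rho>) (\<lambda>j'. embed e -` (\<sigma>(j:=U)) j')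
        (B (lab G e)) (unembed \<circ> \<rho>') (\<lambda>j'. embed e -` (\<sigma>'(j:=W)) j')"
    proof
      fix e assume e: "e \<in> edges G"
      have f1: "(\<lambda>j'. embed e -` (\<sigma>(j:=U)) j') = (\<lambda>j. embed e -` \<sigma> j)(j := embed e -` U)" by (rule ext) auto
      have f2: "(\<lambda>j'. embed e -` (\<sigma>'(j:=W)) j') = (\<lambda>j. embed e -` \<sigma>' j)(j := Wf e)" using Wpre[OF e] by (intro ext) auto
      show "Eqv (cvoc G arX S arS e) r M (Dof \<rho> D e) (insert j D2) (A (lab G e)) (unembed \<circ> \<rho>) (\<lambda>j'. embed e -` (\<sigma>(j:=U)) j')
        (B (lab G e)) (unembed \<circ> \<rho>') (\<lambda>j'. embed e -` (\<sigma>'(j:=W)) j')"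
        unfolding f1 f2 using Wf e by blast
    qed
  qed (use h U Wsub WG in auto)
  then show ?thesis using Wsub by blast
qed

lemma main:
  fixes A B :: "'x \<Rightarrow> ('v + 'e, 'a) model"
  assumes finA: "\<forall>e\<in>edges G. finite (univ (A (lab G e)))" and finB: "\<forall>e\<in>edges G. finite (univ (B (lab G e)))"
    and fG: "finite (verts G)" "finite (edges G)"
  shows "Inv G arX S arS M A B r D D2 \<rho> \<sigma> \<rho>' \<sigma>' \<Longrightarrow> wf (voc S arS n) \<phi> \<Longrightarrow> qr \<phi> \<le> r \<Longrightarrow> mods \<phi> \<subseteq> M
    \<Longrightarrow> fv1 \<phi> \<subseteq> D \<Longrightarrow> fv2 \<phi> \<subseteq> D2 \<Longrightarrow> sat (glue G arX A) \<rho> \<sigma> \<phi> \<longleftrightarrow> sat (glue G arX B) \<rho>' \<sigma>' \<phi>"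
proof (induction \<phi> arbitrary: r D D2 \<rho> \<sigma> \<rho>' \<sigma>' rule: fm.induct[of _ "\<lambda>_. True"])
  case (Eq s t) then show ?case by (intro atom_Eq) auto
next
  case (LabA a t) then show ?case by (intro atom_Lab) (auto simp: voc_def)
next
  case (IncA k s t) then show ?case by (intro atom_Inc) (auto simp: voc_def)
next
  case (Mem t Y) then show ?case by (intro atom_Mem[where n=n]) auto
next
  case (Cnt Y k m)
  have fA: "finite (univ (glue G arX A))" and fB: "finite (univ (glue G arX B))"
    using finA finB fG by (auto intro: finite_glue)
  from Cnt show ?case by (intro atom_Cnt[where n=n] fA fB fG) auto
next
  case (Sub Y Z) then show ?case by (intro atom_Sub[where n=n]) auto
next
  case (Sng Y)
  have fA: "finite (univ (glue G arX A))" and fB: "finite (univ (glue G arX B))"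
    using finA finB fG by (auto intro: finite_glue)
  from Sng show ?case by (intro atom_Sng[where n=n] fA fB fG) auto
next
  case (Neg \<phi>) then show ?case by simp
next
  case (Conj \<phi> \<psi>)
  then have "sat (glue G arX A) \<rho> \<sigma> \<phi> \<longleftrightarrow> sat (glue G arX B) \<rho>' \<sigma>' \<phi>"
    "sat (glue G arX A) \<rho> \<sigma> \<psi> \<longleftrightarrow> sat (glue G arX B) \<rho>' \<sigma>' \<psi>"
    using Conj.IH(1)[OF Conj.prems(1)] Conj.IH(2)[OF Conj.prems(1)] Conj.prems(2-) by auto
  then show ?case by simp
next
  case (Ex1 i \<phi>)
  obtain r0 where r: "r = Suc r0" "qr \<phi> \<le> r0" using Ex1.prems(3) by (cases r) auto
  have I: "Inv G arX S arS M A B (Suc r0) D D2 \<rho> \<sigma> \<rho>' \<sigma>'" using Ex1.prems(1) r by simp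
  have P: "wf (voc S arS n) \<phi>" "mods \<phi> \<subseteq> M" "fv1 \<phi> \<subseteq> insert i D" "fv2 \<phi> \<subseteq> D2" using Ex1.prems by auto
  show ?case
  proof
    assume "sat (glue G arX A) \<rho> \<sigma> (Ex1 i \<phi>)"
    then obtain u where u: "u \<in> univ (glue G arX A)" "sat (glue G arX A) (\<rho>(i:=u)) \<sigma> \<phi>" by auto
    obtain w where w: "w \<in> univ (glue G arX B)" "Inv G arX S arS M A B r0 (insert i D) D2 (\<rho>(i:=u)) \<sigma> (\<rho>'(i:=w)) \<sigma>'"
      using Inv_ext1[OF I u(1) finB] by blast
    have "sat (glue G arX B) (\<rho>'(i:=w)) \<sigma>' \<phi>"
      using Ex1.IH[OF w(2) P(1) r(2) P(2-4)] u(2) by (simp add: fun_upd_def)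
    then show "sat (glue G arX B) \<rho>' \<sigma>' (Ex1 i \<phi>)" using w(1) by auto
  next
    assume "sat (glue G arX B) \<rho>' \<sigma>' (Ex1 i \<phi>)"
    then obtain w where w: "w \<in> univ (glue G arX B)" "sat (glue G arX B) (\<rho>'(i:=w)) \<sigma>' \<phi>" by auto
    obtain u where u: "u \<in> univ (glue G arX A)" "Inv G arX S arS M B A r0 (insert i D) D2 (\<rho>'(i:=w)) \<sigma>' (\<rho>(i:=u)) \<sigma>"
      using Inv_ext1[OF Inv_sym[OF I] w(1) finA] by blast
    have "sat (glue G arX A) (\<rho>(i:=u)) \<sigma> \<phi>"
      using Ex1.IH[OF Inv_sym[OF u(2)] P(1) r(2) P(2-4)] w(2) by (simp add: fun_upd_def)
    then show "sat (glue G arX A) \<rho> \<sigma> (Ex1 i \<phi>)" using u(1) by auto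
  qed
next
  case (Ex2 j \<phi>)
  obtain r0 where r: "r = Suc r0" "qr \<phi> \<le> r0" using Ex2.prems(3) by (cases r) auto
  have I: "Inv G arX S arS M A B (Suc r0) D D2 \<rho> \<sigma> \<rho>' \<sigma>'" using Ex2.prems(1) r by simp
  have P: "wf (voc S arS n) \<phi>" "mods \<phi> \<subseteq> M" "fv1 \<phi> \<subseteq> D" "fv2 \<phi> \<subseteq> insert j D2" using Ex2.prems by auto
  show ?case
  proof
    assume "sat (glue G arX A) \<rho> \<sigma> (Ex2 j \<phi>)"
    then obtain U where U: "U \<subseteq> univ (glue G arX A)" "sat (glue G arX A) \<rho> (\<sigma>(j:=U)) \<phi>" by auto
    obtain W where W: "W \<subseteq> univ (glue G arX B)" "Inv G arX S arS M A B r0 D (insert j D2) \<rho> (\<sigma>(j:=U)) \<rho>' (\<sigma>'(j:=W))"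
      using Inv_ext2[OF I U(1) finB] by blast
    have "sat (glue G arX B) \<rho>' (\<sigma>'(j:=W)) \<phi>"
      using Ex2.IH[OF W(2) P(1) r(2) P(2-4)] U(2) by (simp add: fun_upd_def)
    then show "sat (glue G arX B) \<rho>' \<sigma>' (Ex2 j \<phi>)" using W(1) by auto
  next
    assume "sat (glue G arX B) \<rho>' \<sigma>' (Ex2 j \<phi>)"
    then obtain W where W: "W \<subseteq> univ (glue G arX B)" "sat (glue G arX B) \<rho>' (\<sigma>'(j:=W)) \<phi>" by auto
    obtain U where U: "U \<subseteq> univ (glue G arX A)" "Inv G arX S arS M B A r0 D (insert j D2) \<rho>' (\<sigma>'(j:=W)) \<rho> (\<sigma>(j:=U))"
      using Inv_ext2[OF Inv_sym[OF I] W(1) finA] by blast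
    have "sat (glue G arX A) \<rho> (\<sigma>(j:=U)) \<phi>"
      using Ex2.IH[OF Inv_sym[OF U(2)] P(1) r(2) P(2-4)] W(2) by (simp add: fun_upd_def)
    then show "sat (glue G arX A) \<rho> \<sigma> (Ex2 j \<phi>)" using U(1) by auto
  qed
qed auto

end

lemma src_pos_nth: "distinct s \<Longrightarrow> k < length s \<Longrightarrow> src_pos s (s ! k) = k"
  unfolding src_pos_def
  by (rule Least_equality) (auto simp: nth_eq_iff_index_eq leI)

lemma src_pos_in: "v \<in> set s \<Longrightarrow> src_pos s v < length s \<and> s ! src_pos s v = v"
  unfolding src_pos_def by (rule LeastI_ex) (auto simp: in_set_conv_nth)

lemma img_nth: "(\<lambda>k. s ! (k - 1)) ` {1..length s} = set s"
proof
  show "(\<lambda>k. s ! (k - 1)) ` {1..length s} \<subseteq> set s" by auto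
  show "set s \<subseteq> (\<lambda>k. s ! (k - 1)) ` {1..length s}"
  proof
    fix v assume "v \<in> set s"
    then obtain i where "i < length s" "s ! i = v" by (auto simp: in_set_conv_nth)
    then show "v \<in> (\<lambda>k. s ! (k - 1)) ` {1..length s}" by (intro image_eqI[of _ _ "Suc i"]) auto
  qed
qed

lemma embed_img: "embed e ` (Inl ` VV \<union> Inr ` EE - Inl ` CC) = Inl ` ((\<lambda>v. Inr (e, v)) ` (VV - CC)) \<union> Inr ` (Pair e ` EE)"
proof (intro equalityI subsetI)
  fix u assume "u \<in> embed e ` (Inl ` VV \<union> Inr ` EE - Inl ` CC)" then show "u \<in> Inl ` ((\<lambda>v. Inr (e, v)) ` (VV - CC)) \<union> Inr ` (Pair e ` EE)" by (auto simp: image_iff)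
next
  fix u assume "u \<in> Inl ` ((\<lambda>v. Inr (e, v)) ` (VV - CC)) \<union> Inr ` (Pair e ` EE)"
  then consider v where "v \<in> VV" "v \<notin> CC" "u = Inl (Inr (e, v))" | f where "f \<in> EE" "u = Inr (e, f)" by auto
  then show "u \<in> embed e ` (Inl ` VV \<union> Inr ` EE - Inl ` CC)"
  proof cases
    case 1 then show ?thesis by (intro image_eqI[of _ _ "Inl v"]) auto
  next
    case 2 then show ?thesis by (intro image_eqI[of _ _ "Inr f"]) auto
  qed
qed

context
  fixes G :: "('vg, 'eg, 'x) hg" and arX :: "'x \<Rightarrow> nat" and X :: "'x set"
    and S :: "'a set" and arS :: "'a \<Rightarrow> nat" and \<eta> :: "'x \<Rightarrow> ('v, 'e, 'a) hg"
  assumes G: "is_hg X arX G" and eta: "valuation S arS X arX \<eta>"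
begin

lemma edge_facts:
  assumes "e \<in> edges G"
  shows "lab G e \<in> X" "is_hg S arS (\<eta> (lab G e))" "length (srcs (\<eta> (lab G e))) = arX (lab G e)"
    "distinct (srcs (\<eta> (lab G e)))" "set (srcs (\<eta> (lab G e))) \<subseteq> verts (\<eta> (lab G e))"
  using assms G eta unfolding is_hg_def valuation_def arity_def by auto

lemma Cs_model:
  assumes "e \<in> edges G"
  shows "Cs G arX (\<lambda>x. model_of (\<eta> x)) e = Inl ` set (srcs (\<eta> (lab G e)))"
proof -
  have "Cs G arX (\<lambda>x. model_of (\<eta> x)) e = Inl ` ((\<lambda>k. srcs (\<eta> (lab G e)) ! (k - 1)) ` {1..length (srcs (\<eta> (lab G e)))})"
    unfolding Cs_def ne_def model_of_def using edge_facts(3)[OF assms] by (auto simp: image_image)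
  then show ?thesis using img_nth[of "srcs (\<eta> (lab G e))"] by simp
qed

lemma gf_univ: "univ (glue G arX (\<lambda>x. model_of (\<eta> x))) = univ (model_of (flatten G \<eta>))"
proof -
  have "embed e ` (univ (model_of (\<eta> (lab G e))) - Cs G arX (\<lambda>x. model_of (\<eta> x)) e) =
      Inl ` ((\<lambda>v. Inr (e, v)) ` (verts (\<eta> (lab G e)) - set (srcs (\<eta> (lab G e))))) \<union> Inr ` (Pair e ` edges (\<eta> (lab G e)))"
    if e: "e \<in> edges G" for e
    unfolding Cs_model[OF e] by (simp add: model_of_def embed_img)
  then have "((\<Union>e\<in>edges G. embed e ` (univ (model_of (\<eta> (lab G e))) - Cs G arX (\<lambda>x. model_of (\<eta> x)) e)) :: (('vg + 'eg \<times> 'v) + ('eg \<times> 'e)) set) =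
     (\<Union>e\<in>edges G. Inl ` ((\<lambda>v. Inr (e, v)) ` (verts (\<eta> (lab G e)) - set (srcs (\<eta> (lab G e))))) \<union> Inr ` (Pair e ` edges (\<eta> (lab G e))))"
    by (intro SUP_cong refl) simp
  then have "univ (glue G arX (\<lambda>x. model_of (\<eta> x))) = Inl ` Inl ` verts G \<union>
     (\<Union>e\<in>edges G. Inl ` ((\<lambda>v. Inr (e, v)) ` (verts (\<eta> (lab G e)) - set (srcs (\<eta> (lab G e))))) \<union> Inr ` (Pair e ` edges (\<eta> (lab G e))))"
    unfolding glue_def gp_def by (simp add: image_image)
  also have "\<dots> = univ (model_of (flatten G \<eta>))"
    unfolding model_of_def flatten_def by auto
  finally show ?thesis .
qed

lemma gf_lab: "labrel (glue G arX (\<lambda>x. model_of (\<eta> x))) a = labrel (model_of (flatten G \<eta>)) a"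
proof (intro equalityI subsetI)
  fix u assume "u \<in> labrel (glue G arX (\<lambda>x. model_of (\<eta> x))) a"
  then show "u \<in> labrel (model_of (flatten G \<eta>)) a"
    unfolding glue_def model_of_def flatten_def by auto
next
  fix u assume "u \<in> labrel (model_of (flatten G \<eta>)) a"
  then obtain e f where ef: "u = Inr (e, f)" "e \<in> edges G" "f \<in> edges (\<eta> (lab G e))" "lab (\<eta> (lab G e)) f = a"
    unfolding model_of_def flatten_def by auto
  then show "u \<in> labrel (glue G arX (\<lambda>x. model_of (\<eta> x))) a"
    unfolding glue_def model_of_def by (auto intro!: bexI[of _ e] image_eqI[of _ _ "Inr f"])
qed

lemma gf_inc: "increl (glue G arX (\<lambda>x. model_of (\<eta> x))) i = increl (model_of (flatten G \<eta>)) i"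
proof (intro equalityI subsetI)
  fix p assume "p \<in> increl (glue G arX (\<lambda>x. model_of (\<eta> x))) i"
  then consider e x y where "p = (embed e x, embed e y)" "e \<in> edges G" "(x, y) \<in> increl (model_of (\<eta> (lab G e))) i"
      "y \<notin> Cs G arX (\<lambda>x. model_of (\<eta> x)) e"
    | e x k where "p = (embed e x, gp (inc G e ! (k - 1)))" "e \<in> edges G" "k \<in> {1..ne G arX e}"
      "(x, cnst (model_of (\<eta> (lab G e))) k) \<in> increl (model_of (\<eta> (lab G e))) i"
    unfolding glue_def by auto
  then show "p \<in> increl (model_of (flatten G \<eta>)) i"
  proof cases
    case 1
    note e = 1(2)
    obtain f v where fv: "x = Inr f" "y = Inl v" "f \<in> edges (\<eta> (lab G e))" "1 \<le> i" "i \<le> length (inc (\<eta> (lab G e)) f)"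
      "inc (\<eta> (lab G e)) f ! (i - 1) = v" using 1(3) unfolding model_of_def by auto
    have vs: "v \<notin> set (srcs (\<eta> (lab G e)))" using 1(4) fv(2) unfolding Cs_model[OF e] by auto
    show ?thesis unfolding 1(1) fv(1,2) model_of_def flatten_def
      using e fv vs by auto
  next
    case 2
    note e = 2(2)
    let ?s = "srcs (\<eta> (lab G e))"
    have k: "k - 1 < length ?s" using 2(3) edge_facts(3)[OF e] unfolding ne_def by auto
    obtain f where f: "x = Inr f" "f \<in> edges (\<eta> (lab G e))" "1 \<le> i" "i \<le> length (inc (\<eta> (lab G e)) f)"
      "inc (\<eta> (lab G e)) f ! (i - 1) = ?s ! (k - 1)" using 2(4) unfolding model_of_def by auto
    have sp: "src_pos ?s (?s ! (k - 1)) = k - 1" using src_pos_nth[OF edge_facts(4)[OF e] k] .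
    have inS: "?s ! (k - 1) \<in> set ?s" using k by simp
    show ?thesis unfolding 2(1) f(1) model_of_def flatten_def gp_def
      using e f sp inS by auto
  qed
next
  fix p assume "p \<in> increl (model_of (flatten G \<eta>)) i"
  then obtain e f where ef: "p = (Inr (e, f), Inl (inc (flatten G \<eta>) (e, f) ! (i - 1)))" "e \<in> edges G" "f \<in> edges (\<eta> (lab G e))"
    "1 \<le> i" "i \<le> length (inc (\<eta> (lab G e)) f)"
    unfolding model_of_def by (auto simp: flatten_def)
  note e = ef(2)
  let ?s = "srcs (\<eta> (lab G e))"
  define v where "v = inc (\<eta> (lab G e)) f ! (i - 1)"
  have pv: "p = (Inr (e, f), Inl (if v \<in> set ?s then Inl (inc G e ! src_pos ?s v) else Inr (e, v)))"
    using ef unfolding v_def flatten_def by auto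
  have xin: "(Inr f, Inl v) \<in> increl (model_of (\<eta> (lab G e))) i"
    unfolding model_of_def v_def using ef by auto
  show "p \<in> increl (glue G arX (\<lambda>x. model_of (\<eta> x))) i"
  proof (cases "v \<in> set ?s")
    case True
    define k where "k = Suc (src_pos ?s v)"
    have k: "k \<in> {1..ne G arX e}" "?s ! (k - 1) = v" using src_pos_in[OF True] edge_facts(3)[OF e]
      unfolding k_def ne_def by auto
    have c: "cnst (model_of (\<eta> (lab G e))) k = Inl v" using k(2) unfolding model_of_def by simp
    have "p = (embed e (Inr f), gp (inc G e ! (k - 1)))" using pv True unfolding k_def gp_def by simp
    then show ?thesis unfolding glue_def using e k(1) xin c by (auto intro!: exI[of _ e] exI[of _ "Inr f"] exI[of _ k])
  next
    case False
    have "p = (embed e (Inr f), embed e (Inl v))" using pv False by simp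
    moreover have "Inl v \<notin> Cs G arX (\<lambda>x. model_of (\<eta> x)) e" using False unfolding Cs_model[OF e] by auto
    ultimately show ?thesis unfolding glue_def model.select_convs
      apply -
      apply (rule UnI1)
      using e xin by blast
  qed
qed

lemma gf_cnst:
  assumes "j \<in> {1..length (srcs G)}"
  shows "cnst (glue G arX (\<lambda>x. model_of (\<eta> x))) j = cnst (model_of (flatten G \<eta>)) j"
    "cnst (glue G arX (\<lambda>x. model_of (\<eta> x))) j \<in> univ (glue G arX (\<lambda>x. model_of (\<eta> x)))"
proof -
  show "cnst (glue G arX (\<lambda>x. model_of (\<eta> x))) j = cnst (model_of (flatten G \<eta>)) j"
    using assms unfolding glue_def model_of_def flatten_def gp_def by auto
  have "srcs G ! (j - 1) \<in> verts G" using assms G unfolding is_hg_def by auto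
  then show "cnst (glue G arX (\<lambda>x. model_of (\<eta> x))) j \<in> univ (glue G arX (\<lambda>x. model_of (\<eta> x)))"
    unfolding glue_def by auto
qed

lemma gf_iso: "iso_model (voc S arS (arity G)) (glue G arX (\<lambda>x. model_of (\<eta> x))) (model_of (flatten G \<eta>))"
  unfolding iso_model_def voc_def
  using gf_univ gf_lab gf_inc gf_cnst
  by (auto intro!: exI[of _ id] simp: arity_def bij_betw_id)

end

lemma finite_model_of: "is_hg S0 ar K \<Longrightarrow> finite (univ (model_of K))"
  by (auto simp: model_of_def is_hg_def)

lemma dom_fin:
  assumes "in_domain S arS X arX A" "is_hg X arX G"
  shows "\<forall>e\<in>edges G. finite (univ (A (lab G e)))"
proof
  fix e assume "e \<in> edges G"
  then have "lab G e \<in> X" using assms(2) by (auto simp: is_hg_def)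
  then obtain K where "is_hg S arS K" "A (lab G e) = model_of K" using assms(1) unfolding in_domain_def by blast
  then show "finite (univ (A (lab G e)))" using finite_model_of by metis
qed

theorem lemma4p11:
  fixes S :: "'a set" and arS :: "'a \<Rightarrow> nat"
    and X :: "'x set" and arX :: "'x \<Rightarrow> nat"
    and G :: "('vg, 'eg, 'x) hg"
  assumes "finite S"
    and "is_hg X arX G"
  shows "\<exists>f :: ('x \<Rightarrow> ('v + 'e, 'a) model) \<Rightarrow> (('vg + 'eg \<times> 'v) + ('eg \<times> 'e), 'a) model.
           compatible S arS X arX (arity G) f \<and>
           (\<forall>\<eta> :: 'x \<Rightarrow> ('v, 'e, 'a) hg. valuation S arS X arX \<eta> \<longrightarrow>
              iso_model (voc S arS (arity G)) (f (\<lambda>x. model_of (\<eta> x))) (model_of (flatten G \<eta>)))"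
proof -
  have fG: "finite (verts G)" "finite (edges G)" using assms(2) by (auto simp: is_hg_def)
  define f :: "('x \<Rightarrow> ('v + 'e, 'a) model) \<Rightarrow> (('vg + 'eg \<times> 'v) + ('eg \<times> 'e), 'a) model" where "f = glue G arX"
  have compat: "compatible S arS X arX (arity G) f"
    unfolding compatible_def
  proof (intro allI impI)
    fix r M and A B :: "'x \<Rightarrow> ('v + 'e, 'a) model"
    assume h: "in_domain S arS X arX A \<and> in_domain S arS X arX B \<and> (\<forall>x\<in>X. rM_equiv (voc S arS (arX x)) r M (A x) (B x))"
    have finA: "\<forall>e\<in>edges G. finite (univ (A (lab G e)))" using dom_fin h assms(2) by blast
    have finB: "\<forall>e\<in>edges G. finite (univ (B (lab G e)))" using dom_fin h assms(2) by blast
    have I: "Inv G arX S arS M A B r {} {} (\<lambda>_. undefined) (\<lambda>_. {}) (\<lambda>_. undefined) (\<lambda>_. {})"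
    proof (rule InvI)
      show "\<forall>e\<in>edges G. Eqv (cvoc G arX S arS e) r M (Dof (\<lambda>_. undefined) {} e) {} (A (lab G e)) (unembed \<circ> (\<lambda>_. undefined))
         (\<lambda>j. embed e -` (\<lambda>_. {}) j) (B (lab G e)) (unembed \<circ> (\<lambda>_. undefined)) (\<lambda>j. embed e -` (\<lambda>_. {}) j)"
      proof
        fix e assume e: "e \<in> edges G"
        have lx: "lab G e \<in> X" using e assms(2) by (auto simp: is_hg_def)
        have R: "rM_equiv (voc S arS (arX (lab G e))) r M (A (lab G e)) (B (lab G e))" using h lx by blast
        show "Eqv (cvoc G arX S arS e) r M (Dof (\<lambda>_. undefined) {} e) {} (A (lab G e)) (unembed \<circ> (\<lambda>_. undefined))
         (\<lambda>j. embed e -` (\<lambda>_. {}) j) (B (lab G e)) (unembed \<circ> (\<lambda>_. undefined)) (\<lambda>j. embed e -` (\<lambda>_. {}) j)"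
          unfolding Eqv_def
        proof (intro allI impI)
          fix \<phi> :: "'a fm"
          assume p: "wf (cvoc G arX S arS e) \<phi> \<and> qr \<phi> \<le> r \<and> mods \<phi> \<subseteq> M \<and> fv1 \<phi> \<subseteq> Dof (\<lambda>_. undefined) {} e \<and> fv2 \<phi> \<subseteq> {}"
          have sent: "sentence (voc S arS (arX (lab G e))) \<phi>" using p unfolding sentence_def ne_def Dof_def by auto
          have m: "models (A (lab G e)) \<phi> \<longleftrightarrow> models (B (lab G e)) \<phi>" using R sent p unfolding rM_equiv_def by blast
          have emp: "(\<lambda>j. embed e -` (\<lambda>_. {}) j) = (\<lambda>_::nat. {})" by auto
          have c1: "sat (A (lab G e)) (unembed \<circ> (\<lambda>_. undefined)) (\<lambda>_. {}) \<phi> = sat (A (lab G e)) (\<lambda>_. undefined) (\<lambda>_. {}) \<phi>"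
            using p unfolding Dof_def by (intro coinc(1)) auto
          have c2: "sat (B (lab G e)) (unembed \<circ> (\<lambda>_. undefined)) (\<lambda>_. {}) \<phi> = sat (B (lab G e)) (\<lambda>_. undefined) (\<lambda>_. {}) \<phi>"
            using p unfolding Dof_def by (intro coinc(1)) auto
          show "sat (A (lab G e)) (unembed \<circ> (\<lambda>_. undefined)) (\<lambda>j. embed e -` (\<lambda>_. {}) j) \<phi> \<longleftrightarrow>
                sat (B (lab G e)) (unembed \<circ> (\<lambda>_. undefined)) (\<lambda>j. embed e -` (\<lambda>_. {}) j) \<phi>"
            unfolding emp c1 c2 using m unfolding models_def .
        qed
      qed
    qed auto
    show "rM_equiv (voc S arS (arity G)) r M (f A) (f B)"
      unfolding rM_equiv_def models_def sentence_def f_def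
      using main[OF finA finB fG I] by auto
  qed
  have iso: "\<forall>\<eta> :: 'x \<Rightarrow> ('v, 'e, 'a) hg. valuation S arS X arX \<eta> \<longrightarrow>
              iso_model (voc S arS (arity G)) (f (\<lambda>x. model_of (\<eta> x))) (model_of (flatten G \<eta>))"
    using gf_iso[OF assms(2)] unfolding f_def by blast
  show ?thesis using compat iso by blast
qed

end
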